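(* Under the setting and assumptions described in the context: if $\beta=0$, then $\Phi(r)\asymp\phi_1(r)\mathbf 1_{\{a_0=0\}}+r^2\mathbf 1_{\{a_0>0\}}$ for $r\in(0,1]$ and $\Phi(r)\asymp\phi_1(r)$ for $r\ge1$; if $\beta\in(0,\infty]$, then $\Phi(r)\asymp\phi_1(r)\mathbf 1_{\{a_0=0\}}+r^2\mathbf 1_{\{a_0>0\}}$ for $r\in(0,1]$ and $\Phi(r)\asymp r^2$ for $r\ge1$. Here $f\asymp g$ on a set means there is a constant $c\ge1$ with $c^{-1}g\le f\le cg$ there.
   Context: Let $d\ge1$ and let $X$ be a symmetric Lévy process on $\mathbb R^d$ with Lévy exponent $\Psi(\xi)=\sum_{i,j=1}^d a_{ij}\xi_i\xi_j+\int_{\mathbb R^d}(1-\cos(\xi\cdot y))J(y)\,dy$ (i.e. $\mathbb E_x[e^{i\xi\cdot(X_t-X_0)}]=e^{-t\Psi(\xi)}$), $A=(a_{ij})$ constant symmetric nonnegative definite, $J\ge0$ symmetric on $\mathbb R^d\setminus\{0\}$ with $\int(1\wedge|z|^2)J(z)dz<\infty$. Put $\Psi^*(r)=\sup_{|z|\le r}\Psi(z)$ and $\Phi(r)=1/\Psi^*(1/r)$ for $r>0$. Assumptions: (UJS) there is $c>0$ with $J(y)\le\frac{c}{r^d}\int_{B(0,r)}J(y-z)dz$ for all $y$ and $0<r\le|y|/2$. $\psi_1$ is increasing on $[0,\infty)$, $\psi_1(r)=1$ for $0<r\le1$, and for constants $0<b_1\le b_2$, $0<\gamma_1\le\gamma_2$,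 $\beta\in[0,\infty]$: $b_1e^{\gamma_1r^\beta}\le\psi_1(r)\le b_2e^{\gamma_2r^\beta}$ for $r>1$ (for $\beta=\infty$: $\psi_1(r)=\infty$ for $r>1$, $1/\infty=0$). $\phi_1$ is strictly increasing on $[0,\infty)$, $\phi_1(0)=0$, $\phi_1(1)=1$, and $a_3(R/r)^{\beta_1}\le\phi_1(R)/\phi_1(r)\le a_4(R/r)^{\beta_2}$ for $0<r<R$, with constants $a_3,a_4>0$, $0<\beta_1\le\beta_2<2$. There are $\gamma\ge1$, $\kappa_1,\kappa_2>0$, $a_0\ge0$ with $\gamma^{-1}a_0|\xi|^2\le\sum a_{ij}\xi_i\xi_j\le\gamma a_0|\xi|^2$ and $\gamma^{-1}\frac1{|x|^d\phi_1(|x|)\psi_1(\kappa_2|x|)}\le J(x)\le\gamma\frac1{|x|^d\phi_1(|x|)\psi_1(\kappa_1|x|)}$ for $x\ne0$. *)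

theory Defs
  imports "HOL-Analysis.Analysis" "HOL-Library.Extended_Real"
begin

definition levy_exponent :: "real^'n^'n \<Rightarrow> (real^'n \<Rightarrow> real) \<Rightarrow> real^'n \<Rightarrow> real" where
  "levy_exponent A J \<xi> = \<xi> \<bullet> (A *v \<xi>) + (\<integral>y. (1 - cos (\<xi> \<bullet> y)) * J y \<partial>lborel)"

definition Psi_star :: "real^'n^'n \<Rightarrow> (real^'n \<Rightarrow> real) \<Rightarrow> real \<Rightarrow> real" where
  "Psi_star A J r = (SUP z\<in>{z::real^'n. norm z \<le> r}. levy_exponent A J z)"

definition Phi_fun :: "real^'n^'n \<Rightarrow> (real^'n \<Rightarrow> real) \<Rightarrow> real \<Rightarrow> real" where
  "Phi_fun A J r = 1 / Psi_star A J (1 / r)"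

end

theory Submission
  imports Defs
begin

lemma one_minus_cos_upper: "1 - cos (t::real) \<le> t\<^sup>2 / 2"
proof -
  have "cos t = 1 - 2 * (sin (t/2))\<^sup>2" using cos_double_sin[of "t/2"] by simp
  moreover have "(sin (t/2))\<^sup>2 \<le> (t/2)\<^sup>2"
    using abs_sin_x_le_abs_x[of "t/2"] by (metis abs_le_square_iff)
  ultimately show ?thesis by (simp add: power_divide)
qed

lemma one_minus_cos_lower:
  assumes "\<bar>t\<bar> \<le> (1::real)" shows "t\<^sup>2 / 4 \<le> 1 - cos t"
proof -
  let ?u = "\<bar>t\<bar>/2"
  have "\<bar>sin ?u - (\<Sum>m<3. sin_coeff m * ?u ^ m)\<bar> \<le> inverse (fact 3) * \<bar>?u\<bar> ^ 3"
    by (rule Maclaurin_sin_bound)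
  moreover have "(\<Sum>m<3. sin_coeff m * ?u ^ m) = ?u"
    by (simp add: eval_nat_numeral sin_coeff_Suc cos_coeff_Suc)
  ultimately have "\<bar>sin ?u - ?u\<bar> \<le> ?u^3/6" by (simp add: fact_numeral)
  hence s: "sin ?u \<ge> ?u - ?u^3/6" by linarith
  have u: "0 \<le> ?u" "?u \<le> 1/2" using assms by auto
  have "?u^3 \<le> ?u * (1/4)"
  proof -
    have "?u^2 \<le> (1/2)^2" by (rule power_mono[OF u(2) u(1)])
    hence "?u * ?u^2 \<le> ?u * (1/4)" using u mult_left_mono[of "?u^2" "1/4" "?u"] by (simp add: power_divide)
    thus ?thesis by (simp add: power3_eq_cube power2_eq_square)
  qed
  with s have s2: "sin ?u \<ge> ?u * (23/24)" by simp
  have "(?u * (23/24))\<^sup>2 \<le> (sin ?u)\<^sup>2" using s2 u by (intro power_mono) auto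
  moreover have "cos t = 1 - 2 * (sin ?u)\<^sup>2"
    using cos_double_sin[of "?u"] by (cases "t \<ge> 0") (auto simp: abs_if)
  moreover have "t\<^sup>2/4 \<le> 2 * (?u * (23/24))\<^sup>2"
    by (simp add: power_mult_distrib power_divide)
  ultimately show ?thesis by linarith
qed

lemma ennreal_le_suminf: "(g::nat\<Rightarrow>ennreal) k \<le> suminf g"
  using sum_le_suminf[OF summableI, of "{k}" g] by simp

lemma cover_out:
  assumes "0 < a" "a < (t::real)" shows "\<exists>k::nat. a * 2^k < t \<and> t \<le> a * 2^(Suc k)"
proof -
  have "1 < t/a" using assms by simp
  obtain n where n: "t/a < 2^n" using real_arch_pow[of 2 "t/a"] by auto
  define m where "m = (LEAST n. t/a \<le> 2^n)"
  have m1: "t/a \<le> 2^m" unfolding m_def by (rule LeastI[of _ n]) (use n in auto)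
  have "m \<noteq> 0" using m1 \<open>1 < t/a\<close> by (cases m) auto
  then obtain k where k: "m = Suc k" by (cases m) auto
  have "\<not> t/a \<le> 2^k" using not_less_Least[of k "\<lambda>n. t/a \<le> 2^n"] k m_def by auto
  hence "a * 2^k < t \<and> t \<le> a * 2^(Suc k)" using m1 k assms by (auto simp: field_simps)
  thus ?thesis by blast
qed

lemma cover_in:
  assumes "0 < t" "t \<le> (a::real)" shows "\<exists>k::nat. a / 2^(Suc k) < t \<and> t \<le> a / 2^k"
proof -
  have "1 \<le> a/t" using assms by simp
  obtain n where n: "a/t < 2^n" using real_arch_pow[of 2 "a/t"] by auto
  define m where "m = (LEAST n. a/t < 2^n)"
  have m1: "a/t < 2^m" unfolding m_def by (rule LeastI[of _ n]) (use n in auto)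
  have "m \<noteq> 0" using m1 \<open>1 \<le> a/t\<close> by (cases m) auto
  then obtain k where k: "m = Suc k" by (cases m) auto
  have "\<not> a/t < 2^k" using not_less_Least[of k "\<lambda>n. a/t < 2^n"] k m_def by auto
  thus ?thesis using m1 k assms by (auto simp: field_simps)
qed

lemma shell_bound:
  fixes f :: "'a::euclidean_space \<Rightarrow> real" and T :: "nat \<Rightarrow> 'a set"
  assumes fm: "f \<in> borel_measurable lborel"
    and Tm: "\<And>k. T k \<in> sets lborel"
    and cov: "\<And>y. y \<in> S \<Longrightarrow> \<exists>k. y \<in> T k"
    and fb: "\<And>k y. y \<in> T k \<Longrightarrow> f y \<le> c k"
    and TR: "\<And>k. T k \<subseteq> cball 0 (R k)"
    and c0: "\<And>k. 0 \<le> c k" and R0: "\<And>k. 0 \<le> R k"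
    and sm: "(\<lambda>k. c k * (unit_ball_vol DIM('a) * R k ^ DIM('a))) sums s"
  shows "(\<integral>\<^sup>+y. ennreal (f y) * indicator S y \<partial>lborel) \<le> ennreal s"
proof -
  have "(\<integral>\<^sup>+y. ennreal (f y) * indicator S y \<partial>lborel)
      \<le> (\<integral>\<^sup>+y. (\<Sum>k. ennreal (f y) * indicator (T k) y) \<partial>lborel)"
  proof (rule nn_integral_mono)
    fix y
    show "ennreal (f y) * indicator S y \<le> (\<Sum>k. ennreal (f y) * indicator (T k) y)"
    proof (cases "y \<in> S")
      case True
      then obtain k where "y \<in> T k" using cov by blast
      hence "ennreal (f y) * indicator S y = ennreal (f y) * indicator (T k) y"
        using True by simp
      also have "\<dots> \<le> (\<Sum>k. ennreal (f y) * indicator (T k) y)" by (rule ennreal_le_suminf)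
      finally show ?thesis .
    qed simp
  qed
  also have "\<dots> = (\<Sum>k. \<integral>\<^sup>+y. ennreal (f y) * indicator (T k) y \<partial>lborel)"
    by (rule nn_integral_suminf) (use fm Tm in auto)
  also have "\<dots> \<le> (\<Sum>k. ennreal (c k * (unit_ball_vol DIM('a) * R k ^ DIM('a))))"
  proof (rule suminf_le, goal_cases)
    case (1 k)
    have "(\<integral>\<^sup>+y. ennreal (f y) * indicator (T k) y \<partial>lborel) \<le> (\<integral>\<^sup>+y. ennreal (c k) * indicator (T k) y \<partial>lborel)"
      by (intro nn_integral_mono) (auto simp: indicator_def fb ennreal_leI)
    also have "\<dots> = ennreal (c k) * emeasure lborel (T k)"
      using nn_integral_cmult_indicator[OF Tm[of k], of "ennreal (c k)"] by (simp add: mult.commute)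
    also have "\<dots> \<le> ennreal (c k) * emeasure lborel (cball (0::'a) (R k))"
      by (intro mult_left_mono emeasure_mono TR) auto
    also have "\<dots> = ennreal (c k * (unit_ball_vol DIM('a) * R k ^ DIM('a)))"
      using R0 c0 by (simp add: emeasure_cball ennreal_mult)
    finally show ?case .
  qed auto
  also have "\<dots> = ennreal s"
    by (rule suminf_ennreal_eq) (use c0 R0 sm in auto)
  finally show ?thesis .
qed

lemma ereal_div_cases:
  fixes \<psi> :: ereal
  assumes "p > 0" "\<psi> \<ge> 1"
  shows "\<psi> = \<infinity> \<Longrightarrow> ereal c / (ereal p * \<psi>) = 0"
    and "\<psi> \<noteq> \<infinity> \<Longrightarrow> \<psi> = ereal (real_of_ereal \<psi>) \<and> real_of_ereal \<psi> \<ge> 1 \<and>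
           ereal c / (ereal p * \<psi>) = ereal (c / (p * real_of_ereal \<psi>))"
proof -
  show "\<psi> = \<infinity> \<Longrightarrow> ereal c / (ereal p * \<psi>) = 0" using assms by simp
  assume "\<psi> \<noteq> \<infinity>"
  then obtain q where q: "\<psi> = ereal q" using assms by (cases \<psi>) auto
  have "q \<ge> 1" using assms q by simp
  thus "\<psi> = ereal (real_of_ereal \<psi>) \<and> real_of_ereal \<psi> \<ge> 1 \<and>
           ereal c / (ereal p * \<psi>) = ereal (c / (p * real_of_ereal \<psi>))"
    using q assms by simp
qed

lemma div_mult_le: "(p::real) > 0 \<Longrightarrow> q \<ge> 1 \<Longrightarrow> g \<ge> 0 \<Longrightarrow> g/(p*q) \<le> g/p"
  by (simp add: divide_simps mult_left_mono mult_le_cancel_left1)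

lemma div_mono2: "(p::real) > 0 \<Longrightarrow> 0 < E \<Longrightarrow> E \<le> q \<Longrightarrow> g \<ge> 0 \<Longrightarrow> g/(p*q) \<le> g/(p*E)"
  by (intro divide_left_mono mult_left_mono mult_pos_pos) auto

locale lset =
  fixes A :: "real^'n^'n" and J :: "real^'n \<Rightarrow> real"
    and \<psi>1 :: "real \<Rightarrow> ereal" and \<phi>1 :: "real \<Rightarrow> real"
    and \<beta> :: ereal
    and b1 b2 \<gamma>1 \<gamma>2 a3 a4 \<beta>1 \<beta>2 \<gamma> \<kappa>1 \<kappa>2 a0 :: real
  assumes A_bounds: "\<And>\<xi>. (1/\<gamma>) * a0 * (norm \<xi>)\<^sup>2 \<le> \<xi> \<bullet> (A *v \<xi>)
                      \<and> \<xi> \<bullet> (A *v \<xi>) \<le> \<gamma> * a0 * (norm \<xi>)\<^sup>2"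
    and \<gamma>_ge: "\<gamma> \<ge> 1" and \<kappa>1_pos: "\<kappa>1 > 0" and \<kappa>2_pos: "\<kappa>2 > 0" and a0_nn: "a0 \<ge> 0"
    and J_meas: "J \<in> borel_measurable lborel"
    and J_nonneg: "\<And>x. x \<noteq> 0 \<Longrightarrow> J x \<ge> 0"
    and J_levy: "integrable lborel (\<lambda>z. min 1 ((norm z)\<^sup>2) * J z)"
    and \<psi>1_mono: "mono_on {0..} \<psi>1"
    and \<psi>1_one: "\<And>r. 0 < r \<Longrightarrow> r \<le> 1 \<Longrightarrow> \<psi>1 r = 1"
    and b1_pos: "0 < b1" and b12: "b1 \<le> b2" and \<gamma>1_pos: "0 < \<gamma>1" and \<gamma>12: "\<gamma>1 \<le> \<gamma>2"
    and \<beta>_nn: "\<beta> \<ge> 0"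
    and \<psi>1_fin: "\<And>b r. \<beta> = ereal b \<Longrightarrow> r > 1 \<Longrightarrow>
                   ereal (b1 * exp (\<gamma>1 * r powr b)) \<le> \<psi>1 r
                 \<and> \<psi>1 r \<le> ereal (b2 * exp (\<gamma>2 * r powr b))"
    and \<psi>1_inf: "\<And>r. \<beta> = \<infinity> \<Longrightarrow> r > 1 \<Longrightarrow> \<psi>1 r = \<infinity>"
    and \<phi>1_mono: "strict_mono_on {0..} \<phi>1"
    and \<phi>1_0: "\<phi>1 0 = 0" and \<phi>1_1: "\<phi>1 1 = 1"
    and a3_pos: "a3 > 0" and a4_pos: "a4 > 0" and \<beta>1_pos: "0 < \<beta>1" and \<beta>12: "\<beta>1 \<le> \<beta>2" and \<beta>2_lt: "\<beta>2 < 2"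
    and \<phi>1_scal: "\<And>r R. 0 < r \<Longrightarrow> r < R \<Longrightarrow>
                    a3 * (R / r) powr \<beta>1 \<le> \<phi>1 R / \<phi>1 r \<and> \<phi>1 R / \<phi>1 r \<le> a4 * (R / r) powr \<beta>2"
    and J_upper: "\<And>x. x \<noteq> 0 \<Longrightarrow>
        ereal (J x) \<le> ereal \<gamma> / (ereal (norm x ^ CARD('n) * \<phi>1 (norm x)) * \<psi>1 (\<kappa>1 * norm x))"
    and J_lower: "\<And>x. x \<noteq> 0 \<Longrightarrow>
        ereal (1 / \<gamma>) / (ereal (norm x ^ CARD('n) * \<phi>1 (norm x)) * \<psi>1 (\<kappa>2 * norm x)) \<le> ereal (J x)"
begin



lemma phi_pos: "0 < r \<Longrightarrow> 0 < \<phi>1 r"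
  using \<phi>1_mono \<phi>1_0 by (metis atLeast_iff less_eq_real_def strict_mono_onD)

lemma phi_mono: "0 \<le> r \<Longrightarrow> r \<le> R \<Longrightarrow> \<phi>1 r \<le> \<phi>1 R"
  using \<phi>1_mono by (metis atLeast_iff order.trans order_le_less strict_mono_onD)

lemma psi_ge1: assumes "0 < s" shows "\<psi>1 s \<ge> 1"
proof (cases "s \<le> 1")
  case True thus ?thesis using \<psi>1_one assms by simp
next
  case False
  hence "\<psi>1 1 \<le> \<psi>1 s" using \<psi>1_mono by (auto intro: mono_onD)
  thus ?thesis using \<psi>1_one[of 1] by simp
qed

lemma pden_pos: "x \<noteq> 0 \<Longrightarrow> 0 < norm x ^ CARD('n) * \<phi>1 (norm x)"
  using phi_pos by simp

lemma J_up: assumes "x \<noteq> 0" shows "J x \<le> \<gamma> / (norm x ^ CARD('n) * \<phi>1 (norm x))"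
proof -
  let ?p = "norm x ^ CARD('n) * \<phi>1 (norm x)" and ?s = "\<psi>1 (\<kappa>1 * norm x)"
  have p: "?p > 0" using pden_pos assms .
  have s: "?s \<ge> 1" using psi_ge1 \<kappa>1_pos assms by simp
  have J: "ereal (J x) \<le> ereal \<gamma> / (ereal ?p * ?s)" using J_upper assms .
  show ?thesis
  proof (cases "?s = \<infinity>")
    case True
    with J ereal_div_cases(1)[OF p s] have "J x \<le> 0" by simp
    moreover have "0 \<le> \<gamma> / ?p" using p \<gamma>_ge by simp
    ultimately show ?thesis by linarith
  next
    case False
    with J ereal_div_cases(2)[OF p s] have J2: "J x \<le> \<gamma> / (?p * real_of_ereal ?s)" and q: "real_of_ereal ?s \<ge> 1"
      by auto
    have "\<gamma> / (?p * real_of_ereal ?s) \<le> \<gamma> / ?p"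
      using p q \<gamma>_ge by (intro div_mult_le) auto
    thus ?thesis using J2 by linarith
  qed
qed


lemma J_up_fin:
  assumes "\<beta> = ereal b" "\<kappa>1 * norm x > 1"
  shows "J x \<le> \<gamma> / (norm x ^ CARD('n) * \<phi>1 (norm x) * (b1 * exp (\<gamma>1 * (\<kappa>1 * norm x) powr b)))"
proof -
  have x: "x \<noteq> 0" using assms \<kappa>1_pos by auto
  let ?p = "norm x ^ CARD('n) * \<phi>1 (norm x)" and ?s = "\<psi>1 (\<kappa>1 * norm x)"
    and ?E = "b1 * exp (\<gamma>1 * (\<kappa>1 * norm x) powr b)"
  have p: "?p > 0" using pden_pos x .
  have s: "?s \<ge> 1" using psi_ge1 \<kappa>1_pos x by simp
  have J: "ereal (J x) \<le> ereal \<gamma> / (ereal ?p * ?s)" using J_upper x .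
  have b: "ereal ?E \<le> ?s" "?s \<le> ereal (b2 * exp (\<gamma>2 * (\<kappa>1 * norm x) powr b))"
    using \<psi>1_fin[OF assms] by auto
  hence "?s \<noteq> \<infinity>" by auto
  with J ereal_div_cases(2)[OF p s] have J2: "J x \<le> \<gamma> / (?p * real_of_ereal ?s)" and
    q: "?s = ereal (real_of_ereal ?s)" by auto
  have "?E \<le> real_of_ereal ?s" using b(1) q by (metis ereal_less_eq(3))
  moreover have "?E > 0" using b1_pos by simp
  ultimately have "\<gamma> / (?p * real_of_ereal ?s) \<le> \<gamma> / (?p * ?E)"
    using p \<gamma>_ge by (intro div_mono2) auto
  thus ?thesis using J2 by (simp add: mult.assoc)
qed

lemma J_up_inf:
  assumes "\<beta> = \<infinity>" "\<kappa>1 * norm x > 1"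
  shows "J x \<le> 0"
proof -
  have x: "x \<noteq> 0" using assms \<kappa>1_pos by auto
  let ?p = "norm x ^ CARD('n) * \<phi>1 (norm x)" and ?s = "\<psi>1 (\<kappa>1 * norm x)"
  have p: "?p > 0" using pden_pos x .
  have s: "?s \<ge> 1" using psi_ge1 \<kappa>1_pos x by simp
  have J: "ereal (J x) \<le> ereal \<gamma> / (ereal ?p * ?s)" using J_upper x .
  with ereal_div_cases(1)[OF p s] \<psi>1_inf[OF assms] show ?thesis by simp
qed

lemma J_low1:
  assumes "x \<noteq> 0" "\<kappa>2 * norm x \<le> 1"
  shows "J x \<ge> (1/\<gamma>) / (norm x ^ CARD('n) * \<phi>1 (norm x))"
proof -
  have "\<psi>1 (\<kappa>2 * norm x) = 1" using \<psi>1_one assms \<kappa>2_pos by simp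
  moreover have "\<phi>1 (norm x) > 0" using phi_pos assms by simp
  ultimately show ?thesis using J_lower[OF assms(1)] assms(1) by simp
qed

definition "B0 = max 1 (b2 * exp \<gamma>2)"

lemma J_low0:
  assumes "\<beta> = 0" "x \<noteq> 0"
  shows "J x \<ge> (1/\<gamma>) / (norm x ^ CARD('n) * \<phi>1 (norm x) * B0)"
proof -
  let ?p = "norm x ^ CARD('n) * \<phi>1 (norm x)" and ?s = "\<psi>1 (\<kappa>2 * norm x)"
  have p: "?p > 0" by (rule pden_pos[OF assms(2)])
  have s: "?s \<ge> 1" using psi_ge1 \<kappa>2_pos assms by simp
  have sb: "?s \<le> ereal B0"
  proof (cases "\<kappa>2 * norm x \<le> 1")
    case True
    hence "?s = 1" using \<psi>1_one assms \<kappa>2_pos by simp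
    moreover have "1 \<le> B0" by (simp add: B0_def)
    ultimately show ?thesis by simp
  next
    case False
    hence "?s \<le> ereal (b2 * exp (\<gamma>2 * (\<kappa>2 * norm x) powr 0))"
      using \<psi>1_fin[of 0 "\<kappa>2 * norm x"] assms by (simp add: zero_ereal_def)
    also have "\<dots> \<le> ereal B0" using False \<kappa>2_pos assms by (simp add: B0_def)
    finally show ?thesis .
  qed
  hence "?s \<noteq> \<infinity>" by auto
  with ereal_div_cases(2)[OF p s, of "1/\<gamma>"] have e: "ereal (1/\<gamma>) / (ereal ?p * ?s) = ereal ((1/\<gamma>) / (?p * real_of_ereal ?s))"
    and q: "?s = ereal (real_of_ereal ?s)" "real_of_ereal ?s \<ge> 1" by auto
  have J: "(1/\<gamma>) / (?p * real_of_ereal ?s) \<le> J x" using J_lower[OF assms(2)] e by simp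
  have "real_of_ereal ?s \<le> B0" using sb q by (metis ereal_less_eq(3))
  hence "(1/\<gamma>) / (?p * B0) \<le> (1/\<gamma>) / (?p * real_of_ereal ?s)"
    using p q \<gamma>_ge by (intro div_mono2) auto
  with J show ?thesis by simp
qed


lemma J_mult_nonneg: "f y \<ge> 0 \<Longrightarrow> (y = 0 \<Longrightarrow> f y = 0) \<Longrightarrow> f y * J y \<ge> 0"
  using J_nonneg by (cases "y = 0") auto

definition "gfun y = min 1 ((norm y)\<^sup>2) * J y"
definition "hfun \<rho> y = min 1 (\<rho>\<^sup>2 * (norm y)\<^sup>2) * J y"
definition "G \<rho> = (\<integral>y. hfun \<rho> y \<partial>lborel)"
definition "jump \<xi> = (\<integral>y. (1 - cos (\<xi> \<bullet> y)) * J y \<partial>lborel)"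

lemma J_meas'[measurable]: "J \<in> borel_measurable borel"
  using J_meas by simp

lemma gfun_nonneg: "gfun y \<ge> 0" unfolding gfun_def by (rule J_mult_nonneg) auto
lemma hfun_nonneg: "hfun \<rho> y \<ge> 0" unfolding hfun_def by (rule J_mult_nonneg) auto
lemma jint_nonneg: "(1 - cos (\<xi> \<bullet> y)) * J y \<ge> 0" by (rule J_mult_nonneg) auto

lemma gfun_int: "integrable lborel gfun"
  using J_levy unfolding gfun_def by simp

lemma hfun_meas[measurable]: "hfun \<rho> \<in> borel_measurable borel"
  unfolding hfun_def by measurable

lemma hfun_le_gfun: "hfun \<rho> y \<le> max 1 (\<rho>\<^sup>2) * gfun y"
proof -
  have "min 1 (\<rho>\<^sup>2 * (norm y)\<^sup>2) \<le> max 1 (\<rho>\<^sup>2) * min 1 ((norm y)\<^sup>2)"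
  proof (cases "(norm y)\<^sup>2 \<le> 1")
    case True
    hence "\<rho>\<^sup>2 * (norm y)\<^sup>2 \<le> max 1 (\<rho>\<^sup>2) * (norm y)\<^sup>2" by (intro mult_right_mono) auto
    thus ?thesis using True by simp
  qed auto
  show ?thesis
  proof (cases "y = 0")
    case False
    hence "J y \<ge> 0" using J_nonneg by auto
    from mult_right_mono[OF \<open>min 1 _ \<le> _\<close> this] show ?thesis unfolding hfun_def gfun_def
      by (simp add: mult.assoc)
  qed (simp add: hfun_def gfun_def)
qed

lemma hfun_int: "integrable lborel (hfun \<rho>)"
proof (rule Bochner_Integration.integrable_bound[where f="\<lambda>y. max 1 (\<rho>\<^sup>2) * gfun y"])
  show "integrable lborel (\<lambda>y. max 1 (\<rho>\<^sup>2) * gfun y)" using gfun_int by simp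
  show "AE x in lborel. norm (hfun \<rho> x) \<le> norm (max 1 (\<rho>\<^sup>2) * gfun x)"
    using hfun_le_gfun hfun_nonneg gfun_nonneg by (auto simp: abs_mult)
qed simp

lemma jint_le: assumes "norm \<xi> \<le> \<rho>" shows "(1 - cos (\<xi> \<bullet> y)) * J y \<le> 2 * hfun \<rho> y"
proof -
  have "\<bar>\<xi> \<bullet> y\<bar> \<le> \<rho> * norm y"
    using Cauchy_Schwarz_ineq2[of \<xi> y] assms by (meson mult_right_mono norm_ge_zero order.trans)
  hence "\<bar>\<xi> \<bullet> y\<bar>\<^sup>2 \<le> (\<rho> * norm y)\<^sup>2" by (rule power_mono[OF _ abs_ge_zero])
  hence "(\<xi> \<bullet> y)\<^sup>2 \<le> (\<rho> * norm y)\<^sup>2" by simp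
  hence "1 - cos (\<xi> \<bullet> y) \<le> (\<rho> * norm y)\<^sup>2 / 2" using one_minus_cos_upper[of "\<xi> \<bullet> y"] by linarith
  moreover have "1 - cos (\<xi> \<bullet> y) \<le> 2" using cos_ge_minus_one[of "\<xi> \<bullet> y"] by linarith
  moreover have "(\<rho> * norm y)\<^sup>2 / 2 \<le> 2 * (\<rho>\<^sup>2 * (norm y)\<^sup>2)"
    by (simp add: power_mult_distrib)
  ultimately have cm: "1 - cos (\<xi> \<bullet> y) \<le> 2 * min 1 (\<rho>\<^sup>2 * (norm y)\<^sup>2)"
    unfolding min_def by (auto split: if_splits)
  show ?thesis
  proof (cases "y = 0")
    case False
    hence "J y \<ge> 0" using J_nonneg by auto
    from mult_right_mono[OF cm this] show ?thesis unfolding hfun_def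
      by (simp add: mult.assoc)
  qed (simp add: hfun_def)
qed

lemma jint_int: "integrable lborel (\<lambda>y. (1 - cos (\<xi> \<bullet> y)) * J y)"
proof (rule Bochner_Integration.integrable_bound[where f="\<lambda>y. 2 * hfun (norm \<xi>) y"])
  show "integrable lborel (\<lambda>y. 2 * hfun (norm \<xi>) y)" using hfun_int by simp
  show "AE x in lborel. norm ((1 - cos (\<xi> \<bullet> x)) * J x) \<le> norm (2 * hfun (norm \<xi>) x)"
  proof (rule AE_I2)
    fix x
    have "norm ((1 - cos (\<xi> \<bullet> x)) * J x) = (1 - cos (\<xi> \<bullet> x)) * J x"
      using jint_nonneg[of \<xi> x] by (simp only: real_norm_def abs_of_nonneg)
    moreover have "norm (2 * hfun (norm \<xi>) x) = 2 * hfun (norm \<xi>) x"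
      using hfun_nonneg[of "norm \<xi>" x] by simp
    ultimately show "norm ((1 - cos (\<xi> \<bullet> x)) * J x) \<le> norm (2 * hfun (norm \<xi>) x)"
      using jint_le[of \<xi> "norm \<xi>" x] by simp
  qed
qed measurable

lemma jump_nonneg: "jump \<xi> \<ge> 0"
  unfolding jump_def by (rule integral_nonneg_AE) (use jint_nonneg in auto)

lemma jump_le: "norm \<xi> \<le> \<rho> \<Longrightarrow> jump \<xi> \<le> 2 * G \<rho>"
proof -
  assume a: "norm \<xi> \<le> \<rho>"
  have "jump \<xi> \<le> (\<integral>y. 2 * hfun \<rho> y \<partial>lborel)"
    unfolding jump_def by (rule integral_mono[OF jint_int _ jint_le[OF a]]) (use hfun_int in simp)
  thus ?thesis unfolding G_def by simp
qed

lemma Psi_eq: "levy_exponent A J \<xi> = \<xi> \<bullet> (A *v \<xi>) + jump \<xi>"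
  unfolding levy_exponent_def jump_def by simp

lemma Psi_le: assumes "norm \<xi> \<le> \<rho>" shows "levy_exponent A J \<xi> \<le> \<gamma> * a0 * \<rho>\<^sup>2 + 2 * G \<rho>"
proof -
  have "\<xi> \<bullet> (A *v \<xi>) \<le> \<gamma> * a0 * (norm \<xi>)\<^sup>2" using A_bounds by blast
  also have "\<dots> \<le> \<gamma> * a0 * \<rho>\<^sup>2"
    using assms \<gamma>_ge a0_nn by (intro mult_left_mono power_mono) auto
  finally show ?thesis using Psi_eq jump_le[OF assms] by simp
qed

lemma Psi_ge_quad: "levy_exponent A J \<xi> \<ge> (1/\<gamma>) * a0 * (norm \<xi>)\<^sup>2"
proof -
  have "(1/\<gamma>) * a0 * (norm \<xi>)\<^sup>2 \<le> \<xi> \<bullet> (A *v \<xi>)" using A_bounds by blast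
  thus ?thesis using Psi_eq[of \<xi>] jump_nonneg[of \<xi>] by linarith
qed

lemma Psi_ge_jump: "levy_exponent A J \<xi> \<ge> jump \<xi>"
proof -
  have "0 \<le> (1/\<gamma>) * a0 * (norm \<xi>)\<^sup>2" using \<gamma>_ge a0_nn by simp
  thus ?thesis using Psi_eq A_bounds[of \<xi>] by simp
qed

lemma Psi_bdd: "bdd_above (levy_exponent A J ` {z. norm z \<le> \<rho>})"
proof (rule bdd_aboveI2)
  fix z :: "real^'n" assume "z \<in> {z. norm z \<le> \<rho>}"
  thus "levy_exponent A J z \<le> \<gamma> * a0 * \<rho>\<^sup>2 + 2 * G \<rho>" using Psi_le by simp
qed

lemma Psi_star_ge: "norm z \<le> \<rho> \<Longrightarrow> levy_exponent A J z \<le> Psi_star A J \<rho>"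
  unfolding Psi_star_def by (rule cSUP_upper[OF _ Psi_bdd]) auto

lemma Psi_star_le: "0 \<le> \<rho> \<Longrightarrow> Psi_star A J \<rho> \<le> \<gamma> * a0 * \<rho>\<^sup>2 + 2 * G \<rho>"
  unfolding Psi_star_def
proof (rule cSUP_least)
  assume "0 \<le> \<rho>"
  thus "{z. norm z \<le> \<rho>} \<noteq> {}" by (auto intro: exI[of _ 0])
next
  fix z :: "real^'n" assume "z \<in> {z. norm z \<le> \<rho>}"
  thus "levy_exponent A J z \<le> \<gamma> * a0 * \<rho>\<^sup>2 + 2 * G \<rho>" using Psi_le by simp
qed

end

context lset begin

definition "\<omega> = unit_ball_vol (real CARD('n))"

lemma \<omega>_pos: "\<omega> > 0" unfolding \<omega>_def by simp

lemma powr_2pow: "((2::real)^n) powr b = (2 powr b)^n"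
  by (simp add: powr_realpow[symmetric] powr_powr powr_power mult.commute)

lemma phi_ratio_in:
  assumes "s > 0"
  shows "\<phi>1 s / \<phi>1 (s / 2^Suc k) \<le> a4 * (2 powr \<beta>2)^Suc k"
proof -
  have "(1::real) < 2^Suc k" by (rule one_less_power) auto
  hence "s / 2^Suc k < s" using assms by (simp add: divide_less_eq)
  hence "\<phi>1 s / \<phi>1 (s / 2^Suc k) \<le> a4 * (s / (s / 2^Suc k)) powr \<beta>2"
    using \<phi>1_scal[of "s / 2^Suc k" s] assms by simp
  also have "s / (s / 2^Suc k) = 2^Suc k" using assms by simp
  finally show ?thesis by (simp only: powr_2pow)
qed

lemma phi_ratio_out:
  assumes "s > 0"
  shows "min 1 a3 * (2 powr \<beta>1)^k * \<phi>1 s \<le> \<phi>1 (s * 2^k)"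
proof (cases k)
  case 0 thus ?thesis using phi_pos[OF assms] by (simp add: min_def)
next
  case (Suc m)
  have "(1::real) < 2^k" using Suc by (intro one_less_power) auto
  hence "s < s * 2^k" using assms by simp
  hence "a3 * (s * 2^k / s) powr \<beta>1 \<le> \<phi>1 (s * 2^k) / \<phi>1 s"
    using \<phi>1_scal[of s "s * 2^k"] assms by simp
  also have "s * 2^k / s = 2^k" using assms by simp
  finally have "a3 * (2 powr \<beta>1)^k \<le> \<phi>1 (s * 2^k) / \<phi>1 s" by (simp only: powr_2pow)
  hence "a3 * (2 powr \<beta>1)^k * \<phi>1 s \<le> \<phi>1 (s * 2^k)"
    using phi_pos[OF assms] by (simp add: pos_le_divide_eq)
  moreover have "min 1 a3 * (2 powr \<beta>1)^k * \<phi>1 s \<le> a3 * (2 powr \<beta>1)^k * \<phi>1 s"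
    using phi_pos[OF assms] by (intro mult_right_mono) auto
  ultimately show ?thesis by linarith
qed


lemma hfun_meas'[measurable]: "hfun \<rho> \<in> borel_measurable lborel"
  using hfun_meas by simp

lemma hfun_le_sq: "hfun \<rho> y \<le> \<rho>\<^sup>2 * (norm y)\<^sup>2 * J y"
proof (cases "y = 0")
  case False
  hence "J y \<ge> 0" using J_nonneg by auto
  thus ?thesis unfolding hfun_def by (intro mult_right_mono) auto
qed (simp add: hfun_def)

lemma hfun_le_J: assumes "y \<noteq> 0" shows "hfun \<rho> y \<le> J y"
proof -
  have "J y \<ge> 0" using J_nonneg assms by auto
  thus ?thesis unfolding hfun_def using mult_right_mono[of "min 1 (\<rho>\<^sup>2 * (norm y)\<^sup>2)" 1 "J y"] by simp
qed

lemma J_up_r0: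
  assumes "0 < r0" "r0 \<le> norm y"
  shows "J y \<le> \<gamma> / (r0 ^ CARD('n) * \<phi>1 r0)"
proof -
  have y: "y \<noteq> 0" using assms by auto
  have "r0 ^ CARD('n) * \<phi>1 r0 \<le> norm y ^ CARD('n) * \<phi>1 (norm y)"
    using assms phi_pos[of r0] by (intro mult_mono power_mono phi_mono) auto
  hence "\<gamma> / (norm y ^ CARD('n) * \<phi>1 (norm y)) \<le> \<gamma> / (r0 ^ CARD('n) * \<phi>1 r0)"
    using assms phi_pos[of r0] phi_pos[of "norm y"] y \<gamma>_ge by (intro divide_left_mono mult_pos_pos) auto
  thus ?thesis using J_up[OF y] by linarith
qed

lemma inner_bound:
  assumes s: "s > 0"
  defines "q \<equiv> 2 powr \<beta>2"
  shows "(\<integral>\<^sup>+y. ennreal (hfun (1/s) y) * indicator (cball 0 s - {0}) y \<partial>lborel)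
           \<le> ennreal (\<gamma> * a4 * q * 2^CARD('n) * \<omega> / (1 - q/4) / \<phi>1 s)"
proof -
  have q: "0 < q" "q < 4" unfolding q_def using \<beta>2_lt powr_less_mono[of \<beta>2 2 2] by auto
  have ps: "\<phi>1 s > 0" using phi_pos s by simp
  define c where "c k = (1/s)^2 * (s/2^k)^2 * \<gamma> * a4 * q^Suc k / ((s/2^Suc k)^CARD('n) * \<phi>1 s)" for k
  define K where "K = \<gamma> * a4 * q * 2^CARD('n) * \<omega> / \<phi>1 s"
  show ?thesis
  proof (rule shell_bound[where T="\<lambda>k. cball 0 (s/2^k) - cball 0 (s/2^Suc k)" and R="\<lambda>k. s/2^k" and c=c])
    show "hfun (1/s) \<in> borel_measurable lborel" by simp
    show "\<And>k. cball (0::real^'n) (s/2^k) - cball 0 (s/2^Suc k) \<in> sets lborel" by auto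
    show "\<exists>k. y \<in> cball 0 (s/2^k) - cball 0 (s/2^Suc k)" if "y \<in> cball 0 s - {0}" for y :: "real^'n"
      using cover_in[of "norm y" s] that by auto
    show "\<And>k. cball (0::real^'n) (s/2^k) - cball 0 (s/2^Suc k) \<subseteq> cball 0 (s/2^k)" by auto
    show "\<And>k. 0 \<le> s/2^k" using s by simp
    show "\<And>k. 0 \<le> c k" unfolding c_def using s q ps \<gamma>_ge a4_pos by simp
    show "hfun (1/s) y \<le> c k" if y: "y \<in> cball 0 (s/2^k) - cball 0 (s/2^Suc k)" for k and y :: "real^'n"
    proof -
      let ?r0 = "s/2^Suc k"
      have r0: "0 < ?r0" "?r0 \<le> norm y" "norm y \<le> s/2^k" using y s by auto
      have pr0: "\<phi>1 ?r0 > 0" using phi_pos r0 by simp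
      have "y \<noteq> 0" using r0 by auto
      hence Jy: "J y \<ge> 0" using J_nonneg by auto
      have rat: "\<phi>1 s \<le> a4 * q^Suc k * \<phi>1 ?r0"
        using phi_ratio_in[OF s, of k] pr0 unfolding q_def by (simp add: divide_le_eq)
      have g: "\<gamma> / (?r0 ^ CARD('n) * \<phi>1 ?r0) \<le> \<gamma> * a4 * q^Suc k / (?r0 ^ CARD('n) * \<phi>1 s)"
      proof -
        have "\<gamma> / (?r0 ^ CARD('n) * \<phi>1 ?r0) = \<gamma> * (a4 * q^Suc k) / (?r0 ^ CARD('n) * (a4 * q^Suc k * \<phi>1 ?r0))"
          using q a4_pos by (simp add: field_simps)
        also have "\<dots> \<le> \<gamma> * (a4 * q^Suc k) / (?r0 ^ CARD('n) * \<phi>1 s)"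
          using rat q a4_pos \<gamma>_ge r0 ps pr0 by (intro divide_left_mono mult_left_mono mult_pos_pos) auto
        finally show ?thesis by (simp add: mult.assoc)
      qed
      have "hfun (1/s) y \<le> (1/s)\<^sup>2 * (norm y)\<^sup>2 * J y" by (rule hfun_le_sq)
      also have "\<dots> \<le> (1/s)\<^sup>2 * (s/2^k)\<^sup>2 * (\<gamma> / (?r0 ^ CARD('n) * \<phi>1 ?r0))"
        using r0 Jy J_up_r0[OF r0(1,2)] s by (intro mult_mono power_mono) auto
      also have "\<dots> \<le> (1/s)\<^sup>2 * (s/2^k)\<^sup>2 * (\<gamma> * a4 * q^Suc k / (?r0 ^ CARD('n) * \<phi>1 s))"
        using g by (intro mult_left_mono) auto
      also have "\<dots> = c k" unfolding c_def by simp
      finally show ?thesis .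
    qed
    have tm: "c k * (unit_ball_vol (real DIM(real^'n)) * (s/2^k) ^ DIM(real^'n)) = K * (q/4)^k" for k
    proof -
      have e1: "(s/2^k)^CARD('n) = 2^CARD('n) * (s/2^Suc k)^CARD('n)"
        by (simp add: power_mult_distrib[symmetric])
      have e2: "(1/s)^2 * (s/2^k)^2 = (1/4)^k"
      proof -
        have "(1/s)^2 * (s/2^k)^2 = (1/s * (s/2^k))^2" by (rule power_mult_distrib[symmetric])
        also have "1/s * (s/2^k) = (1/2)^k" using s by (simp add: power_divide)
        also have "((1/2::real)^k)^2 = ((1/2)^2)^k" by (simp add: power_mult[symmetric] mult.commute)
        also have "((1/2::real)^2) = 1/4" by (simp add: power2_eq_square)
        finally show ?thesis .
      qed
      have "c k * (unit_ball_vol (real DIM(real^'n)) * (s/2^k) ^ DIM(real^'n))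
          = ((1/s)^2 * (s/2^k)^2) * \<gamma> * a4 * q * q^k * \<omega> * 2^CARD('n) / \<phi>1 s"
        unfolding c_def \<omega>_def using s by (simp add: e1 field_simps)
      also have "\<dots> = K * (q/4)^k" unfolding e2 K_def by (simp add: power_divide field_simps)
      finally show ?thesis .
    qed
    have "(\<lambda>k. K * (q/4)^k) sums (K * (1 / (1 - q/4)))"
      by (rule sums_mult[OF geometric_sums]) (use q in simp)
    moreover have "K * (1 / (1 - q/4)) = \<gamma> * a4 * q * 2^CARD('n) * \<omega> / (1 - q/4) / \<phi>1 s"
      unfolding K_def by simp
    ultimately show "(\<lambda>k. c k * (unit_ball_vol (real DIM(real^'n)) * (s/2^k) ^ DIM(real^'n))) sums
        (\<gamma> * a4 * q * 2^CARD('n) * \<omega> / (1 - q/4) / \<phi>1 s)"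
      by (simp only: tm)
  qed
qed


lemma outer_bound:
  assumes s: "s > 0"
  defines "p \<equiv> 2 powr \<beta>1"
  shows "(\<integral>\<^sup>+y. ennreal (hfun \<rho> y) * indicator (- cball 0 s) y \<partial>lborel)
           \<le> ennreal (\<gamma> * 2^CARD('n) * \<omega> / (min 1 a3 * (1 - 1/p)) / \<phi>1 s)"
proof -
  have p: "1 < p" unfolding p_def using \<beta>1_pos powr_less_mono[of 0 \<beta>1 2] by auto
  have ps: "\<phi>1 s > 0" using phi_pos s by simp
  have a3': "0 < min 1 a3" using a3_pos by simp
  define c where "c k = \<gamma> / ((s*2^k)^CARD('n) * (min 1 a3 * p^k * \<phi>1 s))" for k
  define K where "K = \<gamma> * 2^CARD('n) * \<omega> / (min 1 a3 * \<phi>1 s)"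
  show ?thesis
  proof (rule shell_bound[where T="\<lambda>k. cball 0 (s*2^Suc k) - cball 0 (s*2^k)" and R="\<lambda>k. s*2^Suc k" and c=c])
    show "hfun \<rho> \<in> borel_measurable lborel" by simp
    show "\<And>k. cball (0::real^'n) (s*2^Suc k) - cball 0 (s*2^k) \<in> sets lborel" by auto
    show "\<exists>k. y \<in> cball 0 (s*2^Suc k) - cball 0 (s*2^k)" if "y \<in> - cball 0 s" for y :: "real^'n"
      using cover_out[of s "norm y"] that s by auto
    show "\<And>k. cball (0::real^'n) (s*2^Suc k) - cball 0 (s*2^k) \<subseteq> cball 0 (s*2^Suc k)" by auto
    show "\<And>k. 0 \<le> s*2^Suc k" using s by simp
    show "\<And>k. 0 \<le> c k" unfolding c_def using s p ps \<gamma>_ge a3' by simp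
    show "hfun \<rho> y \<le> c k" if y: "y \<in> cball 0 (s*2^Suc k) - cball 0 (s*2^k)" for k and y :: "real^'n"
    proof -
      let ?r0 = "s*2^k"
      have r0: "0 < ?r0" "?r0 \<le> norm y" using y s by auto
      have pr0: "\<phi>1 ?r0 > 0" using phi_pos r0 by simp
      have "y \<noteq> 0" using r0 by auto
      have rat: "min 1 a3 * p^k * \<phi>1 s \<le> \<phi>1 ?r0"
        using phi_ratio_out[OF s, of k] unfolding p_def by simp
      have "hfun \<rho> y \<le> J y" by (rule hfun_le_J) fact
      also have "\<dots> \<le> \<gamma> / (?r0 ^ CARD('n) * \<phi>1 ?r0)" by (rule J_up_r0[OF r0])
      also have "\<dots> \<le> c k" unfolding c_def
        using rat r0 \<gamma>_ge a3' p ps pr0 by (intro divide_left_mono mult_left_mono mult_pos_pos) auto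
      finally show ?thesis .
    qed
    have tm: "c k * (unit_ball_vol (real DIM(real^'n)) * (s*2^Suc k) ^ DIM(real^'n)) = K * (1/p)^k" for k
    proof -
      have e1: "(s*2^Suc k)^CARD('n) = 2^CARD('n) * (s*2^k)^CARD('n)"
        by (simp add: power_mult_distrib[symmetric] mult.commute mult.left_commute)
      show ?thesis
        unfolding c_def K_def \<omega>_def using s p ps a3' by (simp add: e1 field_simps power_divide)
    qed
    have "(\<lambda>k. K * (1/p)^k) sums (K * (1 / (1 - 1/p)))"
      by (rule sums_mult[OF geometric_sums]) (use p in simp)
    moreover have "K * (1 / (1 - 1/p)) = \<gamma> * 2^CARD('n) * \<omega> / (min 1 a3 * (1 - 1/p)) / \<phi>1 s"
      unfolding K_def by simp
    ultimately show "(\<lambda>k. c k * (unit_ball_vol (real DIM(real^'n)) * (s*2^Suc k) ^ DIM(real^'n))) sums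
        (\<gamma> * 2^CARD('n) * \<omega> / (min 1 a3 * (1 - 1/p)) / \<phi>1 s)"
      by (simp only: tm)
  qed
qed

lemma hfun_split:
  "ennreal (hfun \<rho> y) = ennreal (hfun \<rho> y) * indicator (cball 0 s - {0}) y
     + ennreal (hfun \<rho> y) * indicator (- cball 0 s) y"
  by (cases "y = 0") (auto simp: hfun_def indicator_def)

definition "Cin = \<gamma> * a4 * (2 powr \<beta>2) * 2^CARD('n) * \<omega> / (1 - (2 powr \<beta>2)/4)"
definition "Cout = \<gamma> * 2^CARD('n) * \<omega> / (min 1 a3 * (1 - 1/(2 powr \<beta>1)))"

lemma Cin_pos: "Cin > 0"
proof -
  have "2 powr \<beta>2 < 4" using \<beta>2_lt powr_less_mono[of \<beta>2 2 2] by auto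
  thus ?thesis unfolding Cin_def using \<gamma>_ge a4_pos \<omega>_pos by simp
qed

lemma Cout_pos: "Cout > 0"
proof -
  have "1 < 2 powr \<beta>1" using \<beta>1_pos powr_less_mono[of 0 \<beta>1 2] by auto
  thus ?thesis unfolding Cout_def using \<gamma>_ge a3_pos \<omega>_pos by simp
qed

lemma G_upper:
  assumes s: "s > 0"
  shows "G (1/s) \<le> (Cin + Cout) / \<phi>1 s"
proof -
  have ps: "\<phi>1 s > 0" using phi_pos s by simp
  have "(\<integral>\<^sup>+y. ennreal (hfun (1/s) y) \<partial>lborel)
      = (\<integral>\<^sup>+y. ennreal (hfun (1/s) y) * indicator (cball 0 s - {0}) y
            + ennreal (hfun (1/s) y) * indicator (- cball 0 s) y \<partial>lborel)"
    by (subst hfun_split[of "1/s" _ s]) simp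
  also have "\<dots> = (\<integral>\<^sup>+y. ennreal (hfun (1/s) y) * indicator (cball 0 s - {0}) y \<partial>lborel)
      + (\<integral>\<^sup>+y. ennreal (hfun (1/s) y) * indicator (- cball 0 s) y \<partial>lborel)"
    by (rule nn_integral_add; intro borel_measurable_times_ennreal borel_measurable_indicator) auto
  also have "\<dots> \<le> ennreal (Cin / \<phi>1 s) + ennreal (Cout / \<phi>1 s)"
  proof (rule add_mono)
    show "(\<integral>\<^sup>+y. ennreal (hfun (1/s) y) * indicator (cball 0 s - {0}) y \<partial>lborel) \<le> ennreal (Cin / \<phi>1 s)"
      using inner_bound[OF s] unfolding Cin_def .
    show "(\<integral>\<^sup>+y. ennreal (hfun (1/s) y) * indicator (- cball 0 s) y \<partial>lborel) \<le> ennreal (Cout / \<phi>1 s)"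
      using outer_bound[OF s, of "1/s"] unfolding Cout_def .
  qed
  also have "\<dots> = ennreal ((Cin + Cout) / \<phi>1 s)"
  proof -
    have "ennreal (Cin / \<phi>1 s) + ennreal (Cout / \<phi>1 s) = ennreal (Cin / \<phi>1 s + Cout / \<phi>1 s)"
      by (rule ennreal_plus[symmetric]) (use Cin_pos Cout_pos ps in auto)
    also have "Cin / \<phi>1 s + Cout / \<phi>1 s = (Cin + Cout) / \<phi>1 s" by (rule add_divide_distrib[symmetric])
    finally show ?thesis .
  qed
  finally have "(\<integral>\<^sup>+y. ennreal (hfun (1/s) y) \<partial>lborel) \<le> ennreal ((Cin + Cout) / \<phi>1 s)" .
  moreover have "0 \<le> (Cin + Cout) / \<phi>1 s" using Cin_pos Cout_pos ps by simp
  ultimately show ?thesis unfolding G_def by (intro integral_real_bounded)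
qed

end

lemma pow8: "((2::real)^k)^3 = 8^k"
proof -
  have "((2::real)^k)^3 = 2^(k*3)" by (simp add: power_mult)
  also have "\<dots> = (2^3)^k" by (subst mult.commute) (rule power_mult)
  finally show ?thesis by simp
qed
lemma pow48: "(4::real)^k = 8^k * (1/2)^k" by (simp add: power_mult_distrib[symmetric])
lemma pow48': "(4::real)^k / 8^k = (1/2)^k" by (simp add: power_divide[symmetric])

context lset begin

definition "e k = (if \<kappa>1 * 2^k \<le> 1 then 1 else if \<beta> = \<infinity> then 0
    else 1 / (b1 * exp (\<gamma>1 * (\<kappa>1 * 2^k) powr real_of_ereal \<beta>)))"

lemma e_nonneg: "e k \<ge> 0"
  unfolding e_def using b1_pos by simp

lemma J_shell:
  assumes "2^k \<le> norm y"
  shows "J y \<le> \<gamma> * e k / (2^k)^CARD('n)"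
proof -
  have y0: "0 < norm y" using assms by (smt (verit) one_le_power)
  hence y: "y \<noteq> 0" by auto
  have one: "(1::real) \<le> 2^k" by simp
  have p1: "1 \<le> \<phi>1 (norm y)" using phi_mono[of 1 "norm y"] assms one \<phi>1_1 by simp
  have pk: "(2^k)^CARD('n) \<le> norm y ^ CARD('n)" using assms by (intro power_mono) auto
  have pkpos: "(0::real) < (2^k)^CARD('n)" by simp
  have den: "(2^k)^CARD('n) \<le> norm y ^ CARD('n) * \<phi>1 (norm y)"
    using pk p1 mult_mono[OF pk p1] by simp
  show ?thesis
  proof (cases "\<kappa>1 * 2^k \<le> 1")
    case True
    have "J y \<le> \<gamma> / (norm y ^ CARD('n) * \<phi>1 (norm y))" by (rule J_up[OF y])
    also have "\<dots> \<le> \<gamma> / (2^k)^CARD('n)"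
      by (rule divide_left_mono[OF den]) (use \<gamma>_ge mult_pos_pos[OF pden_pos[OF y] pkpos] in auto)
    finally show ?thesis using True by (simp add: e_def)
  next
    case False
    hence kk: "\<kappa>1 * norm y > 1" using assms \<kappa>1_pos
      by (smt (verit) mult_left_mono)
    show ?thesis
    proof (cases "\<beta> = \<infinity>")
      case True
      have "e k = 0" unfolding e_def using True False by simp
      thus ?thesis using J_up_inf[OF True kk] by simp
    next
      case inf: False
      then obtain b where b: "\<beta> = ereal b" using \<beta>_nn by (cases \<beta>) auto
      have b0: "b \<ge> 0" using \<beta>_nn b by simp
      let ?E = "b1 * exp (\<gamma>1 * (\<kappa>1 * norm y) powr b)"
      let ?Ez = "b1 * exp (\<gamma>1 * (\<kappa>1 * 2^k) powr b)"
      have "(\<kappa>1 * 2^k) powr b \<le> (\<kappa>1 * norm y) powr b"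
        using assms \<kappa>1_pos b0 by (intro powr_mono2) auto
      hence E: "?Ez \<le> ?E" using b1_pos \<gamma>1_pos by simp
      have E0: "0 < ?Ez" using b1_pos by simp
      have "J y \<le> \<gamma> / (norm y ^ CARD('n) * \<phi>1 (norm y) * ?E)" by (rule J_up_fin[OF b kk])
      also have "\<dots> \<le> \<gamma> / ((2^k)^CARD('n) * ?Ez)"
      proof (rule divide_left_mono[OF mult_mono[OF den E]])
        show "0 < norm y ^ CARD('n) * \<phi>1 (norm y) * ?E * ((2^k)^CARD('n) * ?Ez)"
          using mult_pos_pos[OF mult_pos_pos[OF pden_pos[OF y] order.strict_trans2[OF E0 E]] mult_pos_pos[OF pkpos E0]] .
      qed (use \<gamma>_ge pden_pos[OF y] E0 in auto)
      also have "\<dots> = \<gamma> * e k / (2^k)^CARD('n)"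
      proof -
        have "e k = 1 / ?Ez" unfolding e_def using False inf b by simp
        thus ?thesis by simp
      qed
      finally show ?thesis .
    qed
  qed
qed

lemma exp_ge_pow:
  assumes "x \<ge> 0" "m > 0"
  shows "(x / real m)^m \<le> exp x"
proof -
  have "x / real m \<le> exp (x / real m)" using exp_ge_add_one_self[of "x / real m"] by linarith
  hence "(x / real m)^m \<le> exp (x / real m)^m" using assms by (intro power_mono) auto
  also have "\<dots> = exp (real m * (x / real m))" by (rule exp_of_nat_mult[symmetric])
  also have "real m * (x / real m) = x" using assms by simp
  finally show ?thesis .
qed

lemma e_bound:
  assumes "\<beta> > 0"
  shows "\<exists>M. \<forall>k. 4^k * e k \<le> M * (1/2)^k"
proof (cases "\<beta> = \<infinity>")
  case True
  have "4^k * e k \<le> (1/\<kappa>1^3) * (1/2)^k" for k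
  proof (cases "\<kappa>1 * 2^k \<le> 1")
    case c: True
    have "(\<kappa>1 * 2^k)^3 \<le> 1" using c \<kappa>1_pos by (simp add: power_le_one)
    hence "\<kappa>1^3 * 8^k \<le> 1" by (simp add: power_mult_distrib pow8)
    hence h8: "8^k \<le> 1/\<kappa>1^3" using \<kappa>1_pos by (simp add: field_simps)
    have ek: "e k = 1" using c by (simp add: e_def)
    show ?thesis using mult_right_mono[OF h8, of "(1/2)^k"] ek pow48[of k] by simp
  next
    case False
    hence "e k = 0" unfolding e_def using True by simp
    thus ?thesis using \<kappa>1_pos by simp
  qed
  thus ?thesis by blast
next
  case False
  then obtain b where b: "\<beta> = ereal b" using assms by (cases \<beta>) auto
  have b0: "b > 0" using assms b by simp
  define m where "m = nat \<lceil>3 / b\<rceil>"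
  have m3: "3 \<le> real m * b"
  proof -
    have c1: "3/b \<le> real_of_int \<lceil>3/b\<rceil>" by (rule le_of_int_ceiling)
    have "0 < 3/b" using b0 by simp
    hence "0 \<le> \<lceil>3/b\<rceil>" using ceiling_mono[of 0 "3/b"] by simp
    hence "real m = real_of_int \<lceil>3/b\<rceil>" unfolding m_def by simp
    with c1 have "3/b \<le> real m" by simp
    thus ?thesis using b0 by (simp add: pos_divide_le_eq)
  qed
  have m0: "m > 0" using m3 by (cases m) auto
  define M where "M = max (1/\<kappa>1^3) (1 / (b1 * (\<gamma>1 / real m)^m * \<kappa>1^3))"
  have "4^k * e k \<le> M * (1/2)^k" for k
  proof (cases "\<kappa>1 * 2^k \<le> 1")
    case c: True
    have "(\<kappa>1 * 2^k)^3 \<le> 1" using c \<kappa>1_pos by (simp add: power_le_one)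
    hence "\<kappa>1^3 * 8^k \<le> 1" by (simp add: power_mult_distrib pow8)
    hence h8: "8^k \<le> 1/\<kappa>1^3" using \<kappa>1_pos by (simp add: field_simps)
    have ek: "e k = 1" using c by (simp add: e_def)
    have "4^k * e k \<le> (1/\<kappa>1^3) * (1/2)^k" using mult_right_mono[OF h8, of "(1/2)^k"] ek pow48[of k] by simp
    also have "\<dots> \<le> M * (1/2)^k" unfolding M_def by (intro mult_right_mono) auto
    finally show ?thesis .
  next
    case c: False
    let ?z = "\<kappa>1 * 2^k"
    have z1: "1 < ?z" using c by simp
    let ?x = "\<gamma>1 * ?z powr b"
    have x0: "0 \<le> ?x" using \<gamma>1_pos by simp
    have "(\<gamma>1 / real m)^m * ?z^3 \<le> (\<gamma>1 / real m)^m * (?z powr b)^m"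
    proof -
      have "?z^3 = ?z powr 3" using z1 by (simp add: powr_realpow)
      also have "\<dots> \<le> ?z powr (real m * b)" using z1 m3 by (intro powr_mono) auto
      also have "\<dots> = (?z powr b)^m" using z1 \<kappa>1_pos powr_power[of ?z b m] by simp
      finally show ?thesis using \<gamma>1_pos by (intro mult_left_mono) auto
    qed
    also have "\<dots> = (?x / real m)^m" by (simp add: power_divide power_mult_distrib)
    also have "\<dots> \<le> exp ?x" by (rule exp_ge_pow[OF x0 m0])
    finally have ex: "(\<gamma>1 / real m)^m * \<kappa>1^3 * 8^k \<le> exp ?x"
      by (simp add: power_mult_distrib pow8 mult.assoc)
    have P: "0 < (\<gamma>1 / real m)^m * \<kappa>1^3 * 8^k" using \<gamma>1_pos \<kappa>1_pos m0 by simp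
    have "e k = 1 / (b1 * exp ?x)" unfolding e_def using c False b by simp
    also have "\<dots> \<le> 1 / (b1 * ((\<gamma>1 / real m)^m * \<kappa>1^3 * 8^k))"
      using ex P b1_pos \<gamma>1_pos \<kappa>1_pos m0 by (intro divide_left_mono mult_left_mono mult_pos_pos) auto
    finally have "4^k * e k \<le> 4^k * (1 / (b1 * ((\<gamma>1 / real m)^m * \<kappa>1^3 * 8^k)))"
      by (intro mult_left_mono) auto
    also have "\<dots> = (1 / (b1 * (\<gamma>1 / real m)^m * \<kappa>1^3)) * (4^k / 8^k)" by (simp add: field_simps)
    also have "(4::real)^k / 8^k = (1/2)^k" by (rule pow48')
    also have "(1 / (b1 * (\<gamma>1 / real m)^m * \<kappa>1^3)) * (1/2)^k \<le> M * (1/2)^k"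
      unfolding M_def by (intro mult_right_mono) auto
    finally show ?thesis .
  qed
  thus ?thesis by blast
qed

lemma e_summable: assumes "\<beta> > 0" shows "summable (\<lambda>k. 4^k * e k)"
proof -
  obtain M where M: "\<And>k. 4^k * e k \<le> M * (1/2)^k" using e_bound[OF assms] by blast
  show ?thesis
  proof (rule summable_comparison_test[where g="\<lambda>k. M * (1/2)^k"])
    show "\<exists>N. \<forall>n\<ge>N. norm (4^n * e n) \<le> M * (1/2)^n" using M e_nonneg by auto
    show "summable (\<lambda>k. M * (1/2::real)^k)" by (intro summable_mult summable_geometric) auto
  qed
qed

end

lemma pow4: "((2::real)^k)^2 = 4^k"
proof -
  have "((2::real)^k)^2 = 2^(k*2)" by (simp add: power_mult)
  also have "\<dots> = (2^2)^k" by (subst mult.commute) (rule power_mult)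
  finally show ?thesis by simp
qed

context lset begin

definition "L = (\<integral>y. gfun y \<partial>lborel)"
definition "Se = (\<Sum>k. 4^k * e k)"

lemma L_nonneg: "L \<ge> 0" unfolding L_def by (rule integral_nonneg_AE) (use gfun_nonneg in auto)
lemma e4_nonneg: "0 \<le> (4::real)^k * e k"
  using e_nonneg[of k] by simp

lemma Se_nonneg: "\<beta> > 0 \<Longrightarrow> Se \<ge> 0"
  unfolding Se_def by (rule suminf_nonneg[OF e_summable]) (assumption, rule e4_nonneg)

lemma gfun_meas'[measurable]: "gfun \<in> borel_measurable lborel"
  unfolding gfun_def by measurable

lemma shell_pt:
  fixes y :: "real^'n"
  assumes y: "y \<in> cball 0 (2^Suc k) - cball 0 (2^k)"
  shows "hfun \<rho> y \<le> \<rho>\<^sup>2 * 4^Suc k * (\<gamma> * e k / (2^k)^CARD('n))"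
proof -
  have n: "2^k < norm y" "norm y \<le> 2^Suc k" using y by auto
  have y0: "y \<noteq> 0" using n(1) by (auto simp del: power_Suc)
  have Jy: "J y \<ge> 0" using J_nonneg y0 by auto
  have sq: "(norm y)\<^sup>2 \<le> 4^Suc k"
  proof -
    have "(norm y)\<^sup>2 \<le> (2^Suc k)\<^sup>2" using n by (intro power_mono) auto
    also have "((2::real)^Suc k)\<^sup>2 = 4^Suc k" by (rule pow4)
    finally show ?thesis .
  qed
  have "hfun \<rho> y \<le> \<rho>\<^sup>2 * (norm y)\<^sup>2 * J y" by (rule hfun_le_sq)
  also have "\<dots> \<le> \<rho>\<^sup>2 * 4^Suc k * (\<gamma> * e k / (2^k)^CARD('n))"
  proof -
    have J': "J y \<le> \<gamma> * e k / (2^k)^CARD('n)" by (rule J_shell) (use n(1) in linarith)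
    have "(norm y)\<^sup>2 * J y \<le> 4^Suc k * (\<gamma> * e k / (2^k)^CARD('n))"
      by (rule mult_mono[OF sq J']) (simp_all add: Jy)
    hence "\<rho>\<^sup>2 * ((norm y)\<^sup>2 * J y) \<le> \<rho>\<^sup>2 * (4^Suc k * (\<gamma> * e k / (2^k)^CARD('n)))"
      by (rule mult_left_mono) simp
    thus ?thesis by (simp only: mult.assoc)
  qed
  finally show ?thesis .
qed

lemma G_upper2:
  assumes b: "\<beta> > 0" and r: "0 < \<rho>"
  shows "G \<rho> \<le> \<rho>\<^sup>2 * (L + 4 * \<gamma> * 2^CARD('n) * \<omega> * Se)"
proof -
  define K where "K = \<rho>\<^sup>2 * (4 * \<gamma> * 2^CARD('n) * \<omega>)"
  have K0: "K \<ge> 0" unfolding K_def using \<gamma>_ge \<omega>_pos by simp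
  have in1: "(\<integral>\<^sup>+y. ennreal (hfun \<rho> y) * indicator (cball 0 1 - {0}) y \<partial>lborel) \<le> ennreal (\<rho>\<^sup>2 * L)"
  proof -
    have "(\<integral>\<^sup>+y. ennreal (hfun \<rho> y) * indicator (cball 0 1 - {0}) y \<partial>lborel)
        \<le> (\<integral>\<^sup>+y. ennreal (\<rho>\<^sup>2 * gfun y) \<partial>lborel)"
    proof (rule nn_integral_mono)
      fix y :: "real^'n"
      show "ennreal (hfun \<rho> y) * indicator (cball 0 1 - {0}) y \<le> ennreal (\<rho>\<^sup>2 * gfun y)"
      proof (cases "y \<in> cball 0 1 - {0}")
        case True
        hence "(norm y)\<^sup>2 \<le> 1" by (simp add: power_le_one)
        hence "gfun y = (norm y)\<^sup>2 * J y" unfolding gfun_def by simp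
        hence "hfun \<rho> y \<le> \<rho>\<^sup>2 * gfun y" using hfun_le_sq[of \<rho> y] by (simp add: mult.assoc)
        thus ?thesis using True by (simp add: ennreal_leI)
      qed simp
    qed
    also have "\<dots> = ennreal (\<integral>y. \<rho>\<^sup>2 * gfun y \<partial>lborel)"
      by (rule nn_integral_eq_integral) (use gfun_int gfun_nonneg in auto)
    also have "(\<integral>y. \<rho>\<^sup>2 * gfun y \<partial>lborel) = \<rho>\<^sup>2 * L" unfolding L_def by simp
    finally show ?thesis .
  qed
  define c where "c k = \<rho>\<^sup>2 * 4^Suc k * (\<gamma> * e k / (2^k)^CARD('n))" for k
  have out1: "(\<integral>\<^sup>+y. ennreal (hfun \<rho> y) * indicator (- cball 0 1) y \<partial>lborel) \<le> ennreal (K * Se)"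
  proof (rule shell_bound[where T="\<lambda>k. cball 0 (2^Suc k) - cball 0 (2^k)" and R="\<lambda>k. 2^Suc k" and c=c])
    show "hfun \<rho> \<in> borel_measurable lborel" by simp
    show "\<And>k. cball (0::real^'n) (2^Suc k) - cball 0 (2^k) \<in> sets lborel" by auto
    show "\<exists>k. y \<in> cball 0 (2^Suc k) - cball 0 (2^k)" if "y \<in> - cball 0 1" for y :: "real^'n"
      using cover_out[of 1 "norm y"] that by auto
    show "\<And>k. cball (0::real^'n) (2^Suc k) - cball 0 (2^k) \<subseteq> cball 0 (2^Suc k)" by auto
    show "\<And>k. 0 \<le> (2::real)^Suc k" by simp
    show "\<And>k. 0 \<le> c k" unfolding c_def using \<gamma>_ge e_nonneg by simp
    show "hfun \<rho> y \<le> c k" if y: "y \<in> cball 0 (2^Suc k) - cball 0 (2^k)" for k and y :: "real^'n"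
      using shell_pt[OF y, of \<rho>] by (simp only: c_def)
    have tm: "c k * (unit_ball_vol (real DIM(real^'n)) * (2^Suc k) ^ DIM(real^'n)) = K * (4^k * e k)" for k
    proof -
      have e1: "((2::real)^Suc k)^CARD('n) = 2^CARD('n) * (2^k)^CARD('n)"
        by (simp only: power_Suc power_mult_distrib)
      have P: "((2::real)^k)^CARD('n) > 0" by simp
      have "c k * (unit_ball_vol (real DIM(real^'n)) * (2^Suc k) ^ DIM(real^'n))
          = \<rho>\<^sup>2 * (4 * 4^k) * (\<gamma> * e k / (2^k)^CARD('n)) * (\<omega> * (2^CARD('n) * (2^k)^CARD('n)))"
        unfolding c_def \<omega>_def DIM_cart DIM_real mult_1_right e1 by (simp only: power_Suc)
      also have "\<dots> = \<rho>\<^sup>2 * (4 * 4^k) * (\<gamma> * e k) * (\<omega> * 2^CARD('n)) * ((2^k)^CARD('n) / (2^k)^CARD('n))"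
        by (simp add: divide_inverse mult_ac)
      also have "\<dots> = K * (4^k * e k)" using P unfolding K_def by (simp add: mult_ac)
      finally show ?thesis .
    qed
    have "(\<lambda>k. K * (4^k * e k)) sums (K * Se)"
      unfolding Se_def by (rule sums_mult[OF summable_sums[OF e_summable[OF b]]])
    thus "(\<lambda>k. c k * (unit_ball_vol (real DIM(real^'n)) * (2^Suc k) ^ DIM(real^'n))) sums (K * Se)"
      by (simp only: tm)
  qed
  have "(\<integral>\<^sup>+y. ennreal (hfun \<rho> y) \<partial>lborel)
      = (\<integral>\<^sup>+y. ennreal (hfun \<rho> y) * indicator (cball 0 1 - {0}) y
            + ennreal (hfun \<rho> y) * indicator (- cball 0 1) y \<partial>lborel)"
    by (subst hfun_split[of \<rho> _ 1]) simp
  also have "\<dots> = (\<integral>\<^sup>+y. ennreal (hfun \<rho> y) * indicator (cball 0 1 - {0}) y \<partial>lborel)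
      + (\<integral>\<^sup>+y. ennreal (hfun \<rho> y) * indicator (- cball 0 1) y \<partial>lborel)"
    by (rule nn_integral_add; intro borel_measurable_times_ennreal borel_measurable_indicator) auto
  also have "\<dots> \<le> ennreal (\<rho>\<^sup>2 * L) + ennreal (K * Se)"
    by (rule add_mono[OF in1 out1])
  also have "\<dots> = ennreal (\<rho>\<^sup>2 * L + K * Se)"
    by (rule ennreal_plus[symmetric]) (use L_nonneg K0 Se_nonneg[OF b] in auto)
  finally have "(\<integral>\<^sup>+y. ennreal (hfun \<rho> y) \<partial>lborel) \<le> ennreal (\<rho>\<^sup>2 * L + K * Se)" .
  moreover have "0 \<le> \<rho>\<^sup>2 * L + K * Se" using L_nonneg K0 Se_nonneg[OF b] by simp
  ultimately have "G \<rho> \<le> \<rho>\<^sup>2 * L + K * Se" unfolding G_def by (intro integral_real_bounded)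
  thus ?thesis unfolding K_def by (simp add: algebra_simps)
qed

end

lemma norm_axis_le: "norm (axis i (\<rho>::real) :: real^'n) \<le> \<bar>\<rho>\<bar>"
proof -
  have "norm (axis i \<rho> :: real^'n) \<le> (\<Sum>j\<in>UNIV. \<bar>(axis i \<rho> :: real^'n) $ j\<bar>)" by (rule norm_le_l1_cart)
  also have "\<dots> = (\<Sum>j\<in>UNIV. if j = i then \<bar>\<rho>\<bar> else 0)" by (intro sum.cong) (auto simp: axis_def)
  also have "\<dots> = \<bar>\<rho>\<bar>" by simp
  finally show ?thesis .
qed

lemma sum_sq_norm: "(\<Sum>i\<in>UNIV. (y$i)\<^sup>2) = (norm (y::real^'n))\<^sup>2"
  unfolding power2_norm_eq_inner inner_vec_def by (simp add: power2_eq_square)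

context lset begin

lemma Psi_star_lower:
  assumes r: "\<rho> > 0" and t: "t > 0" and rt: "\<rho> * t \<le> 1" and m: "m \<ge> 0"
    and Jm: "\<And>y. t/2 < norm y \<Longrightarrow> norm y \<le> t \<Longrightarrow> m \<le> J y"
  shows "\<rho>\<^sup>2 * t\<^sup>2 * m / 16 * (\<omega> * t^CARD('n) * (1 - (1/2)^CARD('n))) \<le> CARD('n) * Psi_star A J \<rho>"
proof -
  define Ab where "Ab = cball (0::real^'n) t - cball 0 (t/2)"
  have Ab_sets[measurable]: "Ab \<in> sets borel" unfolding Ab_def by auto
  have Ab_mem: "t/2 < norm y \<and> norm y \<le> t" if "y \<in> Ab" for y using that unfolding Ab_def by auto
  define f where "f i y = indicator Ab y * ((\<rho> * y$i)\<^sup>2 / 4 * J y)" for i y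
  have f_meas[measurable]: "f i \<in> borel_measurable lborel" for i unfolding f_def by measurable
  have JAb: "J y \<ge> 0" if "y \<in> Ab" for y
  proof -
    have "y \<noteq> 0" using Ab_mem[OF that] t by auto
    thus ?thesis using J_nonneg by auto
  qed
  have f_nonneg: "f i y \<ge> 0" for i y unfolding f_def using JAb by (auto simp: indicator_def)
  have f_le: "f i y \<le> (1 - cos (axis i \<rho> \<bullet> y)) * J y" for i y
  proof (cases "y \<in> Ab")
    case True
    have ip: "axis i \<rho> \<bullet> y = \<rho> * y$i" by (simp add: inner_axis')
    have "\<bar>\<rho> * y$i\<bar> \<le> \<rho> * norm y" using r component_le_norm_cart[of y i] by (simp add: abs_mult)
    also have "\<dots> \<le> \<rho> * t" using Ab_mem[OF True] r by (intro mult_left_mono) auto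
    finally have "\<bar>\<rho> * y$i\<bar> \<le> 1" using rt by linarith
    hence "(\<rho> * y$i)\<^sup>2 / 4 \<le> 1 - cos (axis i \<rho> \<bullet> y)" unfolding ip by (rule one_minus_cos_lower)
    hence "(\<rho> * y$i)\<^sup>2 / 4 * J y \<le> (1 - cos (axis i \<rho> \<bullet> y)) * J y"
      by (rule mult_right_mono) (rule JAb[OF True])
    thus ?thesis using True unfolding f_def by simp
  next
    case False
    thus ?thesis unfolding f_def using jint_nonneg by simp
  qed
  have f_int: "integrable lborel (f i)" for i
  proof (rule Bochner_Integration.integrable_bound[OF jint_int[of "axis i \<rho>"] f_meas])
    show "AE x in lborel. norm (f i x) \<le> norm ((1 - cos (axis i \<rho> \<bullet> x)) * J x)"
      using f_le f_nonneg jint_nonneg by (intro AE_I2) (simp add: abs_of_nonneg)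
  qed
  have fj: "(\<integral>y. f i y \<partial>lborel) \<le> Psi_star A J \<rho>" for i
  proof -
    have "(\<integral>y. f i y \<partial>lborel) \<le> jump (axis i \<rho>)"
      unfolding jump_def by (rule integral_mono[OF f_int jint_int f_le])
    also have "\<dots> \<le> levy_exponent A J (axis i \<rho>)" by (rule Psi_ge_jump)
    also have "\<dots> \<le> Psi_star A J \<rho>" using norm_axis_le[of i \<rho>] r by (intro Psi_star_ge) simp
    finally show ?thesis .
  qed
  define c0 where "c0 = \<rho>\<^sup>2 * t\<^sup>2 * m / 16"
  have c0: "c0 \<ge> 0" unfolding c0_def using m by simp
  have finAb: "emeasure lborel Ab < \<infinity>"
  proof -
    have "emeasure lborel Ab \<le> emeasure lborel (cball (0::real^'n) t)" unfolding Ab_def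
      by (intro emeasure_mono) auto
    also have "\<dots> < \<infinity>" using t by (simp add: emeasure_cball)
    finally show ?thesis .
  qed
  have measAb: "measure lborel Ab = \<omega> * t^CARD('n) * (1 - (1/2)^CARD('n))"
  proof -
    have "measure lborel Ab = measure lborel (cball (0::real^'n) t) - measure lborel (cball (0::real^'n) (t/2))"
      unfolding Ab_def using t by (intro measure_Diff) (auto simp: emeasure_cball)
    also have "\<dots> = \<omega> * t^CARD('n) - \<omega> * (t/2)^CARD('n)"
      using t unfolding \<omega>_def by (simp add: content_cball)
    also have "\<dots> = \<omega> * t^CARD('n) * (1 - (1/2)^CARD('n))"
      by (simp add: power_divide field_simps)
    finally show ?thesis .
  qed
  have ind_int: "integrable lborel (\<lambda>y. c0 * indicator Ab y)"
    using finAb by (intro integrable_mult_right integrable_real_indicator) auto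
  have "c0 * measure lborel Ab = (\<integral>y. c0 * indicator Ab y \<partial>lborel)" by simp
  also have "\<dots> \<le> (\<integral>y. (\<Sum>i\<in>UNIV. f i y) \<partial>lborel)"
  proof (rule integral_mono[OF ind_int])
    show "integrable lborel (\<lambda>y. \<Sum>i\<in>UNIV. f i y)" using f_int by (intro Bochner_Integration.integrable_sum) auto
    fix y :: "real^'n"
    show "c0 * indicator Ab y \<le> (\<Sum>i\<in>UNIV. f i y)"
    proof (cases "y \<in> Ab")
      case True
      have "(\<Sum>i\<in>UNIV. f i y) = \<rho>\<^sup>2 / 4 * J y * (\<Sum>i\<in>UNIV. (y$i)\<^sup>2)"
        unfolding f_def using True by (simp add: sum_distrib_left power_mult_distrib mult_ac)
      also have "\<dots> = \<rho>\<^sup>2 / 4 * J y * (norm y)\<^sup>2" by (simp add: sum_sq_norm)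
      finally have eq: "(\<Sum>i\<in>UNIV. f i y) = \<rho>\<^sup>2 / 4 * J y * (norm y)\<^sup>2" .
      have n: "t/2 < norm y" "norm y \<le> t" using Ab_mem[OF True] by auto
      have sq: "(t/2)\<^sup>2 \<le> (norm y)\<^sup>2" using n t by (intro power_mono) auto
      have "c0 = \<rho>\<^sup>2 / 4 * m * (t/2)\<^sup>2" unfolding c0_def by (simp add: power_divide)
      also have "\<dots> \<le> \<rho>\<^sup>2 / 4 * J y * (norm y)\<^sup>2"
        using Jm[OF n] m sq by (intro mult_mono mult_left_mono) auto
      finally show ?thesis using True eq by simp
    next
      case False thus ?thesis using f_nonneg by (simp add: sum_nonneg)
    qed
  qed
  also have "\<dots> = (\<Sum>i\<in>UNIV. \<integral>y. f i y \<partial>lborel)" by (rule Bochner_Integration.integral_sum) (use f_int in auto)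
  also have "\<dots> \<le> (\<Sum>i\<in>(UNIV::'n set). Psi_star A J \<rho>)" by (intro sum_mono fj)
  also have "\<dots> = CARD('n) * Psi_star A J \<rho>" by simp
  finally show ?thesis unfolding measAb c0_def by (simp add: mult_ac)
qed

end

lemma div_anti: "0 < (a::real) \<Longrightarrow> a \<le> b \<Longrightarrow> 0 \<le> c \<Longrightarrow> c / b \<le> c / a"
  by (simp add: frac_le)

lemma sandwich:
  fixes g P c1 c2 :: real
  assumes "0 < g" "0 < c1" "c1 / g \<le> P" "P \<le> c2 / g"
  shows "(1 / max 1 (max c2 (1/c1))) * g \<le> 1 / P \<and> 1 / P \<le> max 1 (max c2 (1/c1)) * g"
proof -
  let ?c = "max 1 (max c2 (1/c1))"
  have P: "0 < P" using assms by (smt (verit) divide_pos_pos)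
  have c2: "0 < c2" using assms P by (smt (verit) divide_nonpos_pos)
  have "1 / P \<le> 1 / (c1 / g)"
    by (rule divide_left_mono[OF assms(3)]) (use mult_pos_pos[OF P divide_pos_pos[OF assms(2) assms(1)]] in auto)
  also have "\<dots> = (1/c1) * g" by simp
  also have "\<dots> \<le> ?c * g" using assms by (intro mult_right_mono) auto
  finally have u: "1 / P \<le> ?c * g" .
  have "(1 / ?c) * g \<le> (1/c2) * g"
    using assms c2 by (intro mult_right_mono divide_left_mono) auto
  also have "\<dots> = 1 / (c2 / g)" by simp
  also have "\<dots> \<le> 1 / P"
    by (rule divide_left_mono[OF assms(4)]) (use mult_pos_pos[OF divide_pos_pos[OF c2 assms(1)] P] in auto)
  finally show ?thesis using u by simp
qed

context lset begin

definition "cL = \<omega> * (1 - (1/2)^CARD('n)) / (16 * \<gamma> * B0 * CARD('n))"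

lemma B0_ge: "B0 \<ge> 1" unfolding B0_def by simp

lemma cL_pos: "cL > 0"
proof -
  obtain k where k: "CARD('n) = Suc k" using zero_less_card_finite[where 'a='n] by (cases "CARD('n)") auto
  have "(1/2::real)^Suc k < 1" by (rule power_Suc_less_one) auto
  hence "(1/2::real)^CARD('n) < 1" using k by simp
  thus ?thesis unfolding cL_def using \<omega>_pos \<gamma>_ge B0_ge by simp
qed

lemma Psi_low_annulus:
  assumes r: "\<rho> > 0" and t: "t > 0" and rt: "\<rho> * t \<le> 1" and ct: "\<kappa>2 * t \<le> 1 \<or> \<beta> = 0"
  shows "cL * \<rho>\<^sup>2 * t\<^sup>2 / \<phi>1 t \<le> Psi_star A J \<rho>"
proof -
  define m where "m = (1/\<gamma>) / (t^CARD('n) * \<phi>1 t * B0)"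
  have pt: "\<phi>1 t > 0" using phi_pos t by simp
  have m0: "m \<ge> 0" unfolding m_def using \<gamma>_ge pt t B0_ge by simp
  have Jm: "m \<le> J y" if n: "t/2 < norm y" "norm y \<le> t" for y
  proof -
    have y: "y \<noteq> 0" using n t by auto
    have den: "norm y ^ CARD('n) * \<phi>1 (norm y) \<le> t^CARD('n) * \<phi>1 t"
      using n t phi_pos[of "norm y"] y by (intro mult_mono power_mono phi_mono) auto
    have dpos: "0 < norm y ^ CARD('n) * \<phi>1 (norm y)" by (rule pden_pos[OF y])
    show ?thesis
    proof (cases "\<kappa>2 * t \<le> 1")
      case True
      have "\<kappa>2 * norm y \<le> 1" using True n \<kappa>2_pos by (smt (verit) mult_left_mono)
      hence J1: "(1/\<gamma>) / (norm y ^ CARD('n) * \<phi>1 (norm y)) \<le> J y" by (rule J_low1[OF y])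
      have "m \<le> (1/\<gamma>) / (t^CARD('n) * \<phi>1 t)"
        unfolding m_def using t pt B0_ge \<gamma>_ge by (intro div_mult_le) auto
      also have "\<dots> \<le> (1/\<gamma>) / (norm y ^ CARD('n) * \<phi>1 (norm y))"
        by (rule div_anti[OF dpos den]) (use \<gamma>_ge in simp)
      finally show ?thesis using J1 by linarith
    next
      case False
      hence b: "\<beta> = 0" using ct by auto
      have J1: "(1/\<gamma>) / (norm y ^ CARD('n) * \<phi>1 (norm y) * B0) \<le> J y" by (rule J_low0[OF b y])
      have "m \<le> (1/\<gamma>) / (norm y ^ CARD('n) * \<phi>1 (norm y) * B0)"
        unfolding m_def
        by (rule div_anti[OF mult_pos_pos[OF dpos] mult_right_mono[OF den]]) (use \<gamma>_ge B0_ge in auto)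
      thus ?thesis using J1 by linarith
    qed
  qed
  have main: "\<rho>\<^sup>2 * t\<^sup>2 * m / 16 * (\<omega> * t^CARD('n) * (1 - (1/2)^CARD('n))) \<le> CARD('n) * Psi_star A J \<rho>"
    by (rule Psi_star_lower[OF r t rt m0 Jm])
  have eq: "\<rho>\<^sup>2 * t\<^sup>2 * m / 16 * (\<omega> * t^CARD('n) * (1 - (1/2)^CARD('n)))
      = CARD('n) * (cL * \<rho>\<^sup>2 * t\<^sup>2 / \<phi>1 t)"
    unfolding m_def cL_def using t pt \<gamma>_ge B0_ge by (simp add: field_simps)
  have "CARD('n) * (cL * \<rho>\<^sup>2 * t\<^sup>2 / \<phi>1 t) \<le> CARD('n) * Psi_star A J \<rho>"
    using main unfolding eq .
  moreover have "(0::real) < CARD('n)" by simp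
  ultimately show ?thesis by (rule mult_left_le_imp_le)
qed

lemma Psi_low_quad: "\<rho> > 0 \<Longrightarrow> (1/\<gamma>) * a0 * \<rho>\<^sup>2 \<le> Psi_star A J \<rho>"
proof -
  assume r: "\<rho> > 0"
  let ?z = "\<rho> *\<^sub>R axis (undefined::'n) (1::real)"
  have nz: "norm ?z = \<rho>" using r by simp
  have "(1/\<gamma>) * a0 * \<rho>\<^sup>2 \<le> levy_exponent A J ?z" using Psi_ge_quad[of ?z] nz by simp
  also have "\<dots> \<le> Psi_star A J \<rho>" using nz by (intro Psi_star_ge) simp
  finally show ?thesis .
qed

end

lemma exist_c:
  fixes g P :: "real \<Rightarrow> real"
  assumes ca: "0 < ca" and h: "\<And>r. Q r \<Longrightarrow> 0 < g r \<and> ca / g r \<le> P r \<and> P r \<le> cb / g r"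
  shows "\<exists>c\<ge>1. \<forall>r. Q r \<longrightarrow> (1/c) * g r \<le> 1 / P r \<and> 1 / P r \<le> c * g r"
proof (intro exI[of _ "max 1 (max cb (1/ca))"] conjI allI impI)
  show "1 \<le> max 1 (max cb (1/ca))" by simp
  fix r assume "Q r"
  with h have "0 < g r" "ca / g r \<le> P r" "P r \<le> cb / g r" by auto
  from sandwich[OF this(1) ca this(2,3)]
  show "(1 / max 1 (max cb (1/ca))) * g r \<le> 1 / P r" "1 / P r \<le> max 1 (max cb (1/ca)) * g r" by auto
qed

context lset begin

definition "A4 = max 1 a4"
definition "K2 = max 1 \<kappa>2"

lemma h1: assumes "0 < r" "r \<le> 1" shows "1 / \<phi>1 r \<le> A4 / r\<^sup>2"
proof (cases "r = 1")
  case True thus ?thesis using \<phi>1_1 by (simp add: A4_def)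
next
  case False
  hence r1: "r < 1" using assms by simp
  have pr: "\<phi>1 r > 0" using phi_pos assms by simp
  have "\<phi>1 1 / \<phi>1 r \<le> a4 * (1/r) powr \<beta>2" using \<phi>1_scal[OF assms(1) r1] by simp
  also have "(1/r) powr \<beta>2 \<le> (1/r) powr 2"
    using assms \<beta>2_lt by (intro powr_mono) (auto simp: field_simps)
  also have "(1/r) powr 2 = 1/r\<^sup>2" using assms by (simp add: powr_realpow power_divide)
  finally have "1 / \<phi>1 r \<le> a4 / r\<^sup>2" using \<phi>1_1 a4_pos by (simp add: mult_left_mono)
  also have "\<dots> \<le> A4 / r\<^sup>2" unfolding A4_def by (intro divide_right_mono) auto
  finally show ?thesis .
qed

lemma h2: assumes "1 \<le> r" shows "1 / r\<^sup>2 \<le> A4 / \<phi>1 r"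
proof -
  have r0: "0 < r" using assms by simp
  have pr: "\<phi>1 r > 0" using phi_pos r0 by simp
  have "\<phi>1 r \<le> A4 * r\<^sup>2"
  proof (cases "r = 1")
    case True thus ?thesis using \<phi>1_1 by (simp add: A4_def)
  next
    case False
    hence r1: "1 < r" using assms by simp
    have "\<phi>1 r / \<phi>1 1 \<le> a4 * (r/1) powr \<beta>2" using \<phi>1_scal[OF _ r1] by simp
    also have "(r/1) powr \<beta>2 \<le> r powr 2" using r1 \<beta>2_lt powr_mono[of \<beta>2 2 r] by simp
    also have "r powr 2 = r\<^sup>2" using r0 by (simp add: powr_realpow)
    finally have "\<phi>1 r \<le> a4 * r\<^sup>2" using \<phi>1_1 a4_pos by (simp add: mult_left_mono)
    also have "\<dots> \<le> A4 * r\<^sup>2" unfolding A4_def by (intro mult_right_mono) auto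
    finally show ?thesis .
  qed
  thus ?thesis using pr r0 by (simp add: field_simps)
qed

lemma Phi_eq: "Phi_fun A J r = 1 / Psi_star A J (1/r)" unfolding Phi_fun_def ..

lemma C_pos: "Cin + Cout > 0" using Cin_pos Cout_pos by simp
lemma A4_ge: "A4 \<ge> 1" unfolding A4_def by simp
lemma K2_ge: "K2 \<ge> 1" unfolding K2_def by simp

lemma G_up_r: "0 < r \<Longrightarrow> G (1/r) \<le> (Cin + Cout) / \<phi>1 r"
  using G_upper[of r] by simp

lemma part1:
  "\<exists>c\<ge>1. \<forall>r. 0 < r \<and> r \<le> 1 \<longrightarrow>
       (1/c) * (if a0 = 0 then \<phi>1 r else r\<^sup>2) \<le> Phi_fun A J r
     \<and> Phi_fun A J r \<le> c * (if a0 = 0 then \<phi>1 r else r\<^sup>2)"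
proof (cases "a0 = 0")
  case True
  have "\<exists>c\<ge>1. \<forall>r. (0 < r \<and> r \<le> 1) \<longrightarrow> (1/c) * \<phi>1 r \<le> 1 / Psi_star A J (1/r) \<and> 1 / Psi_star A J (1/r) \<le> c * \<phi>1 r"
  proof (rule exist_c[where ca = "cL / K2\<^sup>2" and cb = "2 * (Cin + Cout)"])
    show "0 < cL / K2\<^sup>2" using cL_pos K2_ge by simp
    fix r :: real assume r: "0 < r \<and> r \<le> 1"
    have pr: "\<phi>1 r > 0" using phi_pos r by simp
    have "Psi_star A J (1/r) \<le> 2 * G (1/r)"
      using Psi_star_le[of "1/r"] r True by simp
    also have "\<dots> \<le> 2 * ((Cin + Cout) / \<phi>1 r)" using G_up_r[of r] r by linarith
    finally have up: "Psi_star A J (1/r) \<le> 2 * (Cin + Cout) / \<phi>1 r" by (simp only: times_divide_eq_right)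
    define t where "t = r / K2"
    have t: "0 < t" "t \<le> r" using r K2_ge unfolding t_def by (auto simp: field_simps)
    have rt: "1/r * t \<le> 1" using r K2_ge unfolding t_def by simp
    have ct: "\<kappa>2 * t \<le> 1"
    proof -
      have "\<kappa>2 * t = (\<kappa>2 / K2) * r" unfolding t_def by simp
      also have "\<dots> \<le> 1 * 1" using r \<kappa>2_pos K2_ge
        by (intro mult_mono) (auto simp: K2_def field_simps)
      finally show ?thesis by simp
    qed
    have lo: "cL * (1/r)\<^sup>2 * t\<^sup>2 / \<phi>1 t \<le> Psi_star A J (1/r)"
      using Psi_low_annulus[of "1/r" t] r t rt ct by simp
    have "cL * (1/r)\<^sup>2 * t\<^sup>2 = cL / K2\<^sup>2" unfolding t_def using r by (simp add: power_divide)
    moreover have "cL / K2\<^sup>2 / \<phi>1 r \<le> cL / K2\<^sup>2 / \<phi>1 t"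
      using t phi_pos[of t] phi_mono[of t r] cL_pos K2_ge by (intro div_anti) auto
    ultimately have "cL / K2\<^sup>2 / \<phi>1 r \<le> Psi_star A J (1/r)" using lo by simp
    thus "0 < \<phi>1 r \<and> cL / K2\<^sup>2 / \<phi>1 r \<le> Psi_star A J (1/r) \<and> Psi_star A J (1/r) \<le> 2 * (Cin + Cout) / \<phi>1 r"
      using pr up by simp
  qed
  thus ?thesis using True by (simp add: Phi_eq)
next
  case False
  hence a0: "a0 > 0" using a0_nn by simp
  have "\<exists>c\<ge>1. \<forall>r. (0 < r \<and> r \<le> 1) \<longrightarrow> (1/c) * r\<^sup>2 \<le> 1 / Psi_star A J (1/r) \<and> 1 / Psi_star A J (1/r) \<le> c * r\<^sup>2"
  proof (rule exist_c[where ca = "a0 / \<gamma>" and cb = "\<gamma> * a0 + 2 * (Cin + Cout) * A4"])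
    show "0 < a0 / \<gamma>" using a0 \<gamma>_ge by simp
    fix r :: real assume r: "0 < r \<and> r \<le> 1"
    have up0: "Psi_star A J (1/r) \<le> \<gamma> * a0 * (1/r)\<^sup>2 + 2 * ((Cin + Cout) / \<phi>1 r)"
    proof -
      have "0 \<le> 1/r" "0 < r" using r by auto
      from Psi_star_le[OF this(1)] G_up_r[OF this(2)] show ?thesis by linarith
    qed
    have "(Cin + Cout) / \<phi>1 r = (Cin + Cout) * (1 / \<phi>1 r)" by simp
    also have "\<dots> \<le> (Cin + Cout) * (A4 / r\<^sup>2)" using h1[of r] r C_pos by (intro mult_left_mono) auto
    finally have "Psi_star A J (1/r) \<le> \<gamma> * a0 * (1/r)\<^sup>2 + 2 * ((Cin + Cout) * (A4 / r\<^sup>2))"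
      using up0 by linarith
    also have "\<dots> = (\<gamma> * a0 + 2 * (Cin + Cout) * A4) / r\<^sup>2" using r by (simp add: field_simps power_divide)
    finally have up: "Psi_star A J (1/r) \<le> (\<gamma> * a0 + 2 * (Cin + Cout) * A4) / r\<^sup>2" .
    have lo: "(1/\<gamma>) * a0 * (1/r)\<^sup>2 \<le> Psi_star A J (1/r)" using Psi_low_quad[of "1/r"] r by simp
    hence "a0 / \<gamma> / r\<^sup>2 \<le> Psi_star A J (1/r)" by (simp add: power_divide)
    thus "0 < r\<^sup>2 \<and> a0 / \<gamma> / r\<^sup>2 \<le> Psi_star A J (1/r) \<and> Psi_star A J (1/r) \<le> (\<gamma> * a0 + 2 * (Cin + Cout) * A4) / r\<^sup>2"
      using up r by simp
  qed
  thus ?thesis using False by (simp add: Phi_eq)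
qed


lemma part2:
  assumes b: "\<beta> = 0"
  shows "\<exists>c\<ge>1. \<forall>r\<ge>1. (1/c) * \<phi>1 r \<le> Phi_fun A J r \<and> Phi_fun A J r \<le> c * \<phi>1 r"
proof -
  have "\<exists>c\<ge>1. \<forall>r. 1 \<le> r \<longrightarrow> (1/c) * \<phi>1 r \<le> 1 / Psi_star A J (1/r) \<and> 1 / Psi_star A J (1/r) \<le> c * \<phi>1 r"
  proof (rule exist_c[where ca = "cL" and cb = "\<gamma> * a0 * A4 + 2 * (Cin + Cout)"])
    show "0 < cL" by (rule cL_pos)
    fix r :: real assume r1: "1 \<le> r"
    hence r: "0 < r" by simp
    have pr: "\<phi>1 r > 0" using phi_pos r by simp
    have up0: "Psi_star A J (1/r) \<le> \<gamma> * a0 * (1/r)\<^sup>2 + 2 * ((Cin + Cout) / \<phi>1 r)"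
    proof -
      have "0 \<le> 1/r" "0 < r" using r by auto
      from Psi_star_le[OF this(1)] G_up_r[OF this(2)] show ?thesis by linarith
    qed
    have "\<gamma> * a0 * (1/r)\<^sup>2 = \<gamma> * a0 * (1/r\<^sup>2)" by (simp add: power_divide)
    also have "\<dots> \<le> \<gamma> * a0 * (A4 / \<phi>1 r)" using h2[OF r1] \<gamma>_ge a0_nn by (intro mult_left_mono) auto
    finally have "Psi_star A J (1/r) \<le> \<gamma> * a0 * (A4 / \<phi>1 r) + 2 * ((Cin + Cout) / \<phi>1 r)"
      using up0 by linarith
    also have "\<dots> = (\<gamma> * a0 * A4 + 2 * (Cin + Cout)) / \<phi>1 r" using pr by (simp add: field_simps)
    finally have up: "Psi_star A J (1/r) \<le> (\<gamma> * a0 * A4 + 2 * (Cin + Cout)) / \<phi>1 r" .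
    have lo: "cL * (1/r)\<^sup>2 * r\<^sup>2 / \<phi>1 r \<le> Psi_star A J (1/r)"
      using Psi_low_annulus[of "1/r" r] r b by simp
    hence "cL / \<phi>1 r \<le> Psi_star A J (1/r)" using r by (simp add: power_divide)
    thus "0 < \<phi>1 r \<and> cL / \<phi>1 r \<le> Psi_star A J (1/r) \<and> Psi_star A J (1/r) \<le> (\<gamma> * a0 * A4 + 2 * (Cin + Cout)) / \<phi>1 r"
      using pr up by simp
  qed
  thus ?thesis by (simp add: Phi_eq)
qed

lemma part3:
  assumes b: "\<beta> > 0"
  shows "\<exists>c\<ge>1. \<forall>r\<ge>1. (1/c) * r\<^sup>2 \<le> Phi_fun A J r \<and> Phi_fun A J r \<le> c * r\<^sup>2"
proof -
  define C2 where "C2 = L + 4 * \<gamma> * 2^CARD('n) * \<omega> * Se"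
  have "\<exists>c\<ge>1. \<forall>r. 1 \<le> r \<longrightarrow> (1/c) * r\<^sup>2 \<le> 1 / Psi_star A J (1/r) \<and> 1 / Psi_star A J (1/r) \<le> c * r\<^sup>2"
  proof (rule exist_c[where ca = "cL / (K2\<^sup>2 * \<phi>1 (1/K2))" and cb = "\<gamma> * a0 + 2 * C2"])
    have "\<phi>1 (1/K2) > 0" using phi_pos K2_ge by simp
    thus "0 < cL / (K2\<^sup>2 * \<phi>1 (1/K2))" using cL_pos K2_ge by simp
    fix r :: real assume r1: "1 \<le> r"
    hence r: "0 < r" by simp
    have up0: "Psi_star A J (1/r) \<le> \<gamma> * a0 * (1/r)\<^sup>2 + 2 * ((1/r)\<^sup>2 * C2)"
    proof -
      have "0 \<le> 1/r" "0 < 1/r" using r by auto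
      from Psi_star_le[OF this(1)] G_upper2[OF b this(2)] show ?thesis unfolding C2_def by linarith
    qed
    also have "\<dots> = (\<gamma> * a0 + 2 * C2) / r\<^sup>2" using r by (simp add: field_simps power_divide)
    finally have up: "Psi_star A J (1/r) \<le> (\<gamma> * a0 + 2 * C2) / r\<^sup>2" .
    define t where "t = 1 / K2"
    have t: "0 < t" "t \<le> 1" using K2_ge unfolding t_def by auto
    have rt: "1/r * t \<le> 1" using r1 t by (simp add: field_simps)
    have ct: "\<kappa>2 * t \<le> 1" unfolding t_def K2_def using \<kappa>2_pos by (simp add: field_simps)
    have lo: "cL * (1/r)\<^sup>2 * t\<^sup>2 / \<phi>1 t \<le> Psi_star A J (1/r)"
      using Psi_low_annulus[of "1/r" t] r t rt ct by simp
    moreover have "cL * (1/r)\<^sup>2 * t\<^sup>2 / \<phi>1 t = cL / (K2\<^sup>2 * \<phi>1 (1/K2)) / r\<^sup>2"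
      unfolding t_def using r K2_ge by (simp add: power_divide field_simps)
    ultimately have "cL / (K2\<^sup>2 * \<phi>1 (1/K2)) / r\<^sup>2 \<le> Psi_star A J (1/r)" by simp
    thus "0 < r\<^sup>2 \<and> cL / (K2\<^sup>2 * \<phi>1 (1/K2)) / r\<^sup>2 \<le> Psi_star A J (1/r) \<and> Psi_star A J (1/r) \<le> (\<gamma> * a0 + 2 * C2) / r\<^sup>2"
      using up r by simp
  qed
  thus ?thesis by (simp add: Phi_eq)
qed

lemma main:
    "(\<exists>c\<ge>1. \<forall>r. 0 < r \<and> r \<le> 1 \<longrightarrow>
         (1/c) * (if a0 = 0 then \<phi>1 r else r\<^sup>2) \<le> Phi_fun A J r
       \<and> Phi_fun A J r \<le> c * (if a0 = 0 then \<phi>1 r else r\<^sup>2))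
     \<and> (\<beta> = 0 \<longrightarrow> (\<exists>c\<ge>1. \<forall>r\<ge>1. (1/c) * \<phi>1 r \<le> Phi_fun A J r \<and> Phi_fun A J r \<le> c * \<phi>1 r))
     \<and> (\<beta> > 0 \<longrightarrow> (\<exists>c\<ge>1. \<forall>r\<ge>1. (1/c) * r\<^sup>2 \<le> Phi_fun A J r \<and> Phi_fun A J r \<le> c * r\<^sup>2))"
  using part1 part2 part3 by blast

end

theorem lemma5p1:
  fixes A :: "real^'n^'n" and J :: "real^'n \<Rightarrow> real"
    and \<psi>1 :: "real \<Rightarrow> ereal" and \<phi>1 :: "real \<Rightarrow> real"
    and \<beta> :: ereal
    and b1 b2 \<gamma>1 \<gamma>2 a3 a4 \<beta>1 \<beta>2 \<gamma> \<kappa>1 \<kappa>2 a0 :: real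
  assumes A_sym: "transpose A = A"
    and A_bounds: "\<And>\<xi>. (1/\<gamma>) * a0 * (norm \<xi>)\<^sup>2 \<le> \<xi> \<bullet> (A *v \<xi>)
                      \<and> \<xi> \<bullet> (A *v \<xi>) \<le> \<gamma> * a0 * (norm \<xi>)\<^sup>2"
    and \<gamma>_ge: "\<gamma> \<ge> 1" and \<kappa>_pos: "\<kappa>1 > 0" "\<kappa>2 > 0" and a0_nn: "a0 \<ge> 0"
    and J_meas: "J \<in> borel_measurable lborel"
    and J_nonneg: "\<And>x. x \<noteq> 0 \<Longrightarrow> J x \<ge> 0"
    and J_sym: "\<And>x. x \<noteq> 0 \<Longrightarrow> J (- x) = J x"
    and J_levy: "integrable lborel (\<lambda>z. min 1 ((norm z)\<^sup>2) * J z)"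
    and UJS: "\<exists>c>0. \<forall>y r. 0 < r \<and> r \<le> norm y / 2 \<longrightarrow>
                 J y \<le> c / r ^ CARD('n) * (LINT z:ball 0 r|lborel. J (y - z))"
    and \<psi>1_mono: "mono_on {0..} \<psi>1"
    and \<psi>1_one: "\<And>r. 0 < r \<Longrightarrow> r \<le> 1 \<Longrightarrow> \<psi>1 r = 1"
    and consts_pos: "0 < b1" "b1 \<le> b2" "0 < \<gamma>1" "\<gamma>1 \<le> \<gamma>2"
    and \<beta>_nn: "\<beta> \<ge> 0"
    and \<psi>1_fin: "\<And>b r. \<beta> = ereal b \<Longrightarrow> r > 1 \<Longrightarrow>
                   ereal (b1 * exp (\<gamma>1 * r powr b)) \<le> \<psi>1 r
                 \<and> \<psi>1 r \<le> ereal (b2 * exp (\<gamma>2 * r powr b))"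
    and \<psi>1_inf: "\<And>r. \<beta> = \<infinity> \<Longrightarrow> r > 1 \<Longrightarrow> \<psi>1 r = \<infinity>"
    and \<phi>1_mono: "strict_mono_on {0..} \<phi>1"
    and \<phi>1_0: "\<phi>1 0 = 0" and \<phi>1_1: "\<phi>1 1 = 1"
    and scal_consts: "a3 > 0" "a4 > 0" "0 < \<beta>1" "\<beta>1 \<le> \<beta>2" "\<beta>2 < 2"
    and \<phi>1_scal: "\<And>r R. 0 < r \<Longrightarrow> r < R \<Longrightarrow>
                    a3 * (R / r) powr \<beta>1 \<le> \<phi>1 R / \<phi>1 r \<and> \<phi>1 R / \<phi>1 r \<le> a4 * (R / r) powr \<beta>2"
    and J_upper: "\<And>x. x \<noteq> 0 \<Longrightarrow>
        ereal (J x) \<le> ereal \<gamma> / (ereal (norm x ^ CARD('n) * \<phi>1 (norm x)) * \<psi>1 (\<kappa>1 * norm x))"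
    and J_lower: "\<And>x. x \<noteq> 0 \<Longrightarrow>
        ereal (1 / \<gamma>) / (ereal (norm x ^ CARD('n) * \<phi>1 (norm x)) * \<psi>1 (\<kappa>2 * norm x)) \<le> ereal (J x)"
  shows
    "(\<exists>c\<ge>1. \<forall>r. 0 < r \<and> r \<le> 1 \<longrightarrow>
         (1/c) * (if a0 = 0 then \<phi>1 r else r\<^sup>2) \<le> Phi_fun A J r
       \<and> Phi_fun A J r \<le> c * (if a0 = 0 then \<phi>1 r else r\<^sup>2))
     \<and> (\<beta> = 0 \<longrightarrow> (\<exists>c\<ge>1. \<forall>r\<ge>1. (1/c) * \<phi>1 r \<le> Phi_fun A J r \<and> Phi_fun A J r \<le> c * \<phi>1 r))
     \<and> (\<beta> > 0 \<longrightarrow> (\<exists>c\<ge>1. \<forall>r\<ge>1. (1/c) * r\<^sup>2 \<le> Phi_fun A J r \<and> Phi_fun A J r \<le> c * r\<^sup>2))"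
proof -
  interpret L: lset A J \<psi>1 \<phi>1 \<beta> b1 b2 \<gamma>1 \<gamma>2 a3 a4 \<beta>1 \<beta>2 \<gamma> \<kappa>1 \<kappa>2 a0
    apply (rule lset.intro)
    apply (fact A_bounds)
    apply (fact \<gamma>_ge)
    apply (fact \<kappa>_pos(1))
    apply (fact \<kappa>_pos(2))
    apply (fact a0_nn)
    apply (fact J_meas)
    apply (fact J_nonneg)
    apply (fact J_levy)
    apply (fact \<psi>1_mono)
    apply (fact \<psi>1_one)
    apply (fact consts_pos(1))
    apply (fact consts_pos(2))
    apply (fact consts_pos(3))
    apply (fact consts_pos(4))
    apply (fact \<beta>_nn)
    apply (fact \<psi>1_fin)
    apply (fact \<psi>1_inf)
    apply (fact \<phi>1_mono)
    apply (fact \<phi>1_0)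
    apply (fact \<phi>1_1)
    apply (fact scal_consts(1))
    apply (fact scal_consts(2))
    apply (fact scal_consts(3))
    apply (fact scal_consts(4))
    apply (fact scal_consts(5))
    apply (fact \<phi>1_scal)
    apply (fact J_upper)
    apply (fact J_lower)
    done
  show ?thesis by (rule L.main)
qed

end
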